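(* Let $G$ satisfy conditions (1)–(5) below and let $C_G\subset\mathbb{P}^{d-g}$ be the union of lines defined by an admissible labeling of $\tilde G$ (see context). If $C_G$ contains a cycle of $m$ lines (i.e. $G$ contains a cycle of length $m$), then $C_G$ fails property $N_{2,m-2}$.
   Context: Work over an algebraically closed field of characteristic zero, $S=k[x_0,\ldots,x_{d-g}]$. Conditions on the finite graph $G=(V,E)$, $d=|V|$, $g=|E|-d+1$: (1) connected; (2) simple; (3) every vertex has degree at most $3$ and some vertex has degree less than $3$; (4) the shortest path between any two distinct vertices of degree $3$ has at least $3$ edges; (5) no triangles. Let $\tilde G$ be obtained from $G$ by attaching one loop at each vertex of degree $1$. An admissible labeling of the edges of $\tilde G$: for each vertex of degree $3$ choose two indices $j\neq k$ in $\{0,\ldots,d-g\}$ and label its three edges $e_j,e_k,e_j-e_k$; label each remaining edge $e_i$ with an unused index, distinct indices being used throughout. An index $i$ appears on an edge labeled $e_i$ or $\pm(e_i-e_j)$. For each vertex $v$: if $v$ has degree $3$ with edges $e_j,e_k,e_j-e_k$, $I_v=(x_i: i\neq j,k)$; otherwise $I_v$ is generated by the $x_i$ with $i$ not appearing on an edge of $\tilde G$ at $v$, together with $x_j-x_k$ if some edge at $v$ is labeled $e_j-e_k$. $L_v=V(I_v)$, $C_G=\bigcup_v L_v$. A subscheme $X\subseteq\mathbb{P}^n$ with homogeneous coordinate ring $S_X=S/I_X$ satisfies $N_{k,p}$ if $\beta_{i,j}(S_X)\neq 0$ implies $j=i+k-1$ for all $1\le i\le p$, where $\beta_{i,j}$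 are the graded Betti numbers of $S_X$ over $S$ (i.e. $I_X$ is generated by forms of degree $k$ and the syzygies are linear through the $p$-th step). *)

theory Defs
  imports "HOL-Computational_Algebra.Polynomial" "HOL-Library.Poly_Mapping"
begin

definition graph :: "'v set \<Rightarrow> 'v set set \<Rightarrow> bool" where
  "graph V E \<longleftrightarrow> finite V \<and> (\<forall>e\<in>E. e \<subseteq> V \<and> card e = 2)"

definition adj :: "'v set set \<Rightarrow> 'v \<Rightarrow> 'v \<Rightarrow> bool" where
  "adj E u w \<longleftrightarrow> {u, w} \<in> E"

definition gdeg :: "'v set set \<Rightarrow> 'v \<Rightarrow> nat" where
  "gdeg E v = card {e \<in> E. v \<in> e}"

text \<open>A walk is a nonempty list of vertices, consecutive ones adjacent;
  its length (number of edges) is the list length minus one.\<close>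

definition walk :: "'v set \<Rightarrow> 'v set set \<Rightarrow> 'v list \<Rightarrow> bool" where
  "walk V E ws \<longleftrightarrow> ws \<noteq> [] \<and> set ws \<subseteq> V \<and>
     (\<forall>i. Suc i < length ws \<longrightarrow> adj E (ws ! i) (ws ! Suc i))"

definition connected_graph :: "'v set \<Rightarrow> 'v set set \<Rightarrow> bool" where
  "connected_graph V E \<longleftrightarrow>
     (\<forall>u\<in>V. \<forall>w\<in>V. \<exists>ws. walk V E ws \<and> hd ws = u \<and> last ws = w)"

definition deg3_far :: "'v set \<Rightarrow> 'v set set \<Rightarrow> bool" where
  "deg3_far V E \<longleftrightarrow>
     (\<forall>u\<in>V. \<forall>w\<in>V. u \<noteq> w \<longrightarrow> gdeg E u = 3 \<longrightarrow> gdeg E w = 3 \<longrightarrow>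
        (\<forall>ws. walk V E ws \<longrightarrow> hd ws = u \<longrightarrow> last ws = w \<longrightarrow> length ws - 1 \<ge> 3))"

definition triangle_free :: "'v set \<Rightarrow> 'v set set \<Rightarrow> bool" where
  "triangle_free V E \<longleftrightarrow>
     \<not> (\<exists>a\<in>V. \<exists>b\<in>V. \<exists>c\<in>V. adj E a b \<and> adj E b c \<and> adj E a c)"

definition graph_conditions :: "'v set \<Rightarrow> 'v set set \<Rightarrow> bool" where
  "graph_conditions V E \<longleftrightarrow>
     graph V E \<and> connected_graph V E \<and>
     (\<forall>v\<in>V. gdeg E v \<le> 3) \<and> (\<exists>v\<in>V. gdeg E v < 3) \<and>
     deg3_far V E \<and> triangle_free V E"

definition has_cycle :: "'v set \<Rightarrow> 'v set set \<Rightarrow> nat \<Rightarrow> bool" where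
  "has_cycle V E m \<longleftrightarrow> m \<ge> 3 \<and>
     (\<exists>vs. length vs = m \<and> distinct vs \<and> set vs \<subseteq> V \<and>
        (\<forall>i<m. adj E (vs ! i) (vs ! ((i + 1) mod m))))"

text \<open>G-tilde: a loop at a vertex v is represented by the singleton {v}.\<close>

definition tedges :: "'v set \<Rightarrow> 'v set set \<Rightarrow> 'v set set" where
  "tedges V E = E \<union> {{v} | v. v \<in> V \<and> gdeg E v = 1}"

text \<open>Labels: Lab i stands for e_i, Dif j k stands for e_j - e_k.\<close>

datatype label = Lab nat | Dif nat nat

fun lab_idx :: "label \<Rightarrow> nat set" where
  "lab_idx (Lab i) = {i}"
| "lab_idx (Dif j k) = {j, k}"

definition admissible :: "'v set \<Rightarrow> 'v set set \<Rightarrow> nat \<Rightarrow> ('v set \<Rightarrow> label) \<Rightarrow> bool" where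
  "admissible V E n lab \<longleftrightarrow>
     (\<forall>e\<in>tedges V E. lab_idx (lab e) \<subseteq> {0..n}) \<and>
     (\<forall>v\<in>V. gdeg E v = 3 \<longrightarrow>
        (\<exists>j k. j \<noteq> k \<and> lab ` {e \<in> tedges V E. v \<in> e} = {Lab j, Lab k, Dif j k})) \<and>
     (\<forall>e\<in>tedges V E. (\<forall>v\<in>e. gdeg E v \<noteq> 3) \<longrightarrow> (\<exists>i. lab e = Lab i)) \<and>
     (\<forall>e\<in>tedges V E. \<forall>e'\<in>tedges V E. e \<noteq> e' \<longrightarrow>
        \<not> (\<exists>v. v \<in> e \<and> v \<in> e' \<and> gdeg E v = 3) \<longrightarrow>
        lab_idx (lab e) \<inter> lab_idx (lab e') = {})"

type_synonym 'k mpoly = "(nat \<Rightarrow>\<^sub>0 nat) \<Rightarrow>\<^sub>0 'k"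

definition Var :: "nat \<Rightarrow> 'k::comm_ring_1 mpoly" where
  "Var i = Poly_Mapping.single (Poly_Mapping.single i 1) 1"

definition polyS :: "nat \<Rightarrow> 'k::comm_ring_1 mpoly set" where
  "polyS n = {f. \<forall>m\<in>Poly_Mapping.keys f. Poly_Mapping.keys m \<subseteq> {0..n}}"

definition mdeg :: "(nat \<Rightarrow>\<^sub>0 nat) \<Rightarrow> nat" where
  "mdeg m = (\<Sum>i\<in>Poly_Mapping.keys m. Poly_Mapping.lookup m i)"

definition homog :: "nat \<Rightarrow> 'k::comm_ring_1 mpoly \<Rightarrow> bool" where
  "homog d f \<longleftrightarrow> (\<forall>m\<in>Poly_Mapping.keys f. mdeg m = d)"

definition eval :: "'k::comm_ring_1 mpoly \<Rightarrow> (nat \<Rightarrow> 'k) \<Rightarrow> 'k" where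
  "eval f p = (\<Sum>m\<in>Poly_Mapping.keys f. Poly_Mapping.lookup f m * (\<Prod>i\<in>Poly_Mapping.keys m. p i ^ Poly_Mapping.lookup m i))"

definition Iv_gens :: "'v set \<Rightarrow> 'v set set \<Rightarrow> nat \<Rightarrow> ('v set \<Rightarrow> label) \<Rightarrow> 'v
    \<Rightarrow> 'k::comm_ring_1 mpoly set" where
  "Iv_gens V E n lab v =
     (if gdeg E v = 3 then
        {Var i | i. i \<le> n \<and>
           (\<forall>j k. lab ` {e \<in> tedges V E. v \<in> e} = {Lab j, Lab k, Dif j k} \<longrightarrow> i \<noteq> j \<and> i \<noteq> k)}
      else
        {Var i | i. i \<le> n \<and> (\<forall>e\<in>tedges V E. v \<in> e \<longrightarrow> i \<notin> lab_idx (lab e))}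
        \<union> {Var j - Var k | j k. \<exists>e\<in>tedges V E. v \<in> e \<and> lab e = Dif j k})"

text \<open>Affine cone (in k^(n+1), coordinates 0..n) over L_v = V(I_v):
  common zeros of the generators.\<close>
definition Lv_cone :: "'v set \<Rightarrow> 'v set set \<Rightarrow> nat \<Rightarrow> ('v set \<Rightarrow> label) \<Rightarrow> 'v
    \<Rightarrow> (nat \<Rightarrow> 'k::comm_ring_1) set" where
  "Lv_cone V E n lab v =
     {p. (\<forall>i>n. p i = 0) \<and> (\<forall>f\<in>(Iv_gens V E n lab v :: 'k mpoly set). eval f p = 0)}"

definition CG_cone :: "'v set \<Rightarrow> 'v set set \<Rightarrow> nat \<Rightarrow> ('v set \<Rightarrow> label)
    \<Rightarrow> (nat \<Rightarrow> 'k::comm_ring_1) set" where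
  "CG_cone V E n lab = (\<Union>v\<in>V. Lv_cone V E n lab v)"

text \<open>Homogeneous ideal I_X of a (reduced) subset X of P^n, given by its cone.\<close>
definition vanishing_ideal :: "nat \<Rightarrow> (nat \<Rightarrow> 'k::comm_ring_1) set \<Rightarrow> 'k mpoly set" where
  "vanishing_ideal n X = {f \<in> polyS n. \<forall>p\<in>X. eval f p = 0}"

text \<open>Koszul complex K(x_0..x_n) over S: a chain in homological degree i is
  c :: nat set \<Rightarrow> poly, supported on i-subsets T of {0..n} (coefficient of e_T).
  Differential: d(e_T) = sum over t in T of (-1)^(#{u in T. u < t}) x_t e_(T-{t}).\<close>

definition kchain :: "nat \<Rightarrow> nat \<Rightarrow> (nat set \<Rightarrow> 'k::comm_ring_1 mpoly) \<Rightarrow> bool" where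
  "kchain n i c \<longleftrightarrow>
     (\<forall>T. c T \<noteq> 0 \<longrightarrow> T \<subseteq> {0..n} \<and> card T = i) \<and> (\<forall>T. c T \<in> polyS n)"

definition kdiff :: "nat \<Rightarrow> (nat set \<Rightarrow> 'k::comm_ring_1 mpoly) \<Rightarrow> nat set \<Rightarrow> 'k mpoly" where
  "kdiff n c U = (if U \<subseteq> {0..n} then
       (\<Sum>t\<in>{0..n} - U. (-1) ^ card {u\<in>U. u < t} * Var t * c (insert t U)) else 0)"

text \<open>beta_{i,j}(S/I) = dim_k Tor_i^S(S/I, k)_j = dim_k H_i(K(x) \<otimes> S/I)_j.
  It is nonzero iff there is a chain c of internal degree j (entries of c
  homogeneous of degree j - i) whose boundary has all entries in I, and which is
  not congruent modulo chains with entries in I to a boundary.\<close>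

definition betti_nonzero :: "nat \<Rightarrow> 'k::comm_ring_1 mpoly set \<Rightarrow> nat \<Rightarrow> nat \<Rightarrow> bool" where
  "betti_nonzero n I i j \<longleftrightarrow>
     (\<exists>c. kchain n i c \<and> i \<le> j \<and> (\<forall>T. homog (j - i) (c T)) \<and>
          (\<forall>U. kdiff n c U \<in> I) \<and>
          \<not> (\<exists>b a. kchain n (i + 1) b \<and> kchain n i a \<and> (\<forall>T. a T \<in> I) \<and>
                  (\<forall>T. c T = kdiff n b T + a T)))"

definition satisfies_N :: "nat \<Rightarrow> 'k::comm_ring_1 mpoly set \<Rightarrow> nat \<Rightarrow> nat \<Rightarrow> bool" where
  "satisfies_N n I k p \<longleftrightarrow>
     (\<forall>i j. 1 \<le> i \<and> i \<le> p \<and> betti_nonzero n I i j \<longrightarrow> j = i + k - 1)"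

end

theory Submission
  imports Defs "HOL-Computational_Algebra.Polynomial"
begin

abbreviation mon :: "nat \<Rightarrow> (nat \<Rightarrow>\<^sub>0 nat)" where "mon i \<equiv> Poly_Mapping.single i 1"

definition monv :: "(nat \<Rightarrow>\<^sub>0 nat) \<Rightarrow> (nat \<Rightarrow> 'k::comm_ring_1) \<Rightarrow> 'k" where
  "monv m p = (\<Prod>i\<in>Poly_Mapping.keys m. p i ^ Poly_Mapping.lookup m i)"

definition sl :: "nat \<Rightarrow> 'k::comm_ring_1 mpoly \<Rightarrow> (nat \<Rightarrow> 'k) \<Rightarrow> 'k" where
  "sl d f p = (\<Sum>m\<in>{m\<in>Poly_Mapping.keys f. mdeg m = d}. Poly_Mapping.lookup f m * monv m p)"

lemma eval_mono: "eval f p = (\<Sum>m\<in>Poly_Mapping.keys f. Poly_Mapping.lookup f m * monv m p)"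
  by (simp add: eval_def monv_def)

lemma monv_sup: "finite K \<Longrightarrow> Poly_Mapping.keys m \<subseteq> K \<Longrightarrow> monv m p = (\<Prod>i\<in>K. p i ^ Poly_Mapping.lookup m i)"
  unfolding monv_def by (rule prod.mono_neutral_left) (auto simp: in_keys_iff)

lemma mdeg_sup: "finite K \<Longrightarrow> Poly_Mapping.keys m \<subseteq> K \<Longrightarrow> mdeg m = (\<Sum>i\<in>K. Poly_Mapping.lookup m i)"
  unfolding mdeg_def by (rule sum.mono_neutral_left) (auto simp: in_keys_iff)

lemma monv_add: "monv (m1 + m2) p = monv m1 p * monv m2 p"
proof -
  let ?K = "Poly_Mapping.keys m1 \<union> Poly_Mapping.keys m2"
  have f: "finite ?K" by simp
  have k: "Poly_Mapping.keys (m1 + m2) \<subseteq> ?K" by (rule keys_add)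
  show ?thesis
    by (simp add: monv_sup[OF f k] monv_sup[OF f, of m1] monv_sup[OF f, of m2] lookup_add power_add prod.distrib)
qed

lemma mdeg_add: "mdeg (m1 + m2) = mdeg m1 + mdeg m2"
proof -
  let ?K = "Poly_Mapping.keys m1 \<union> Poly_Mapping.keys m2"
  have f: "finite ?K" by simp
  have k: "Poly_Mapping.keys (m1 + m2) \<subseteq> ?K" by (rule keys_add)
  show ?thesis
    by (simp add: mdeg_sup[OF f k] mdeg_sup[OF f, of m1] mdeg_sup[OF f, of m2] lookup_add sum.distrib)
qed

lemma monv_mon[simp]: "monv (Poly_Mapping.single i (Suc 0)) p = p i"
  by (simp add: monv_def)

lemma mdeg_mon[simp]: "mdeg (Poly_Mapping.single i (Suc 0)) = 1"
  by (simp add: mdeg_def)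

lemma monv_scale: "monv m (\<lambda>i. c * p i) = c ^ mdeg m * monv m p"
  by (simp add: monv_def mdeg_def power_mult_distrib prod.distrib power_sum)

lemma mdeg1: "mdeg m = 1 \<Longrightarrow> \<exists>i. m = mon i"
proof -
  assume a: "mdeg m = 1"
  have "Poly_Mapping.keys m \<noteq> {}" using a by (auto simp: mdeg_def)
  then obtain i where i: "i \<in> Poly_Mapping.keys m" by blast
  have ge: "\<And>j. j \<in> Poly_Mapping.keys m \<Longrightarrow> Poly_Mapping.lookup m j \<ge> 1"
    by (simp add: in_keys_iff)
  have s: "mdeg m = Poly_Mapping.lookup m i + (\<Sum>j\<in>Poly_Mapping.keys m - {i}. Poly_Mapping.lookup m j)"
    unfolding mdeg_def using i by (simp add: sum.remove)
  have li: "Poly_Mapping.lookup m i = 1" using ge[OF i] s a by linarith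
  have rest: "(\<Sum>j\<in>Poly_Mapping.keys m - {i}. Poly_Mapping.lookup m j) = 0" using s a li by linarith
  have "\<And>j. j \<noteq> i \<Longrightarrow> Poly_Mapping.lookup m j = 0"
  proof (rule ccontr)
    fix j assume "j \<noteq> i" "Poly_Mapping.lookup m j \<noteq> 0"
    then have "j \<in> Poly_Mapping.keys m - {i}" by (simp add: in_keys_iff)
    then have "Poly_Mapping.lookup m j \<le> (\<Sum>j\<in>Poly_Mapping.keys m - {i}. Poly_Mapping.lookup m j)"
      by (intro member_le_sum) auto
    with rest \<open>Poly_Mapping.lookup m j \<noteq> 0\<close> show False by simp
  qed
  then have "m = mon i" using li by (intro poly_mapping_eqI) (auto simp: lookup_single when_def)
  then show ?thesis by blast
qed

lemma sl_sup: "finite K \<Longrightarrow> Poly_Mapping.keys f \<subseteq> K \<Longrightarrow>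
   sl d f p = (\<Sum>m\<in>{m\<in>K. mdeg m = d}. Poly_Mapping.lookup f m * monv m p)"
  unfolding sl_def by (rule sum.mono_neutral_left) (auto simp: in_keys_iff)

lemma sl_add: "sl d (f + g) p = sl d f p + sl d g p"
proof -
  let ?K = "Poly_Mapping.keys f \<union> Poly_Mapping.keys g"
  have f: "finite ?K" by simp
  have k: "Poly_Mapping.keys (f + g) \<subseteq> ?K" by (rule keys_add)
  show ?thesis
    by (simp add: sl_sup[OF f k] sl_sup[OF f, of f] sl_sup[OF f, of g] lookup_add sum.distrib algebra_simps)
qed

lemma sl_uminus: "sl d (- f) p = - sl d f p"
  by (simp add: sl_def sum_negf)

lemma sl_zero[simp]: "sl d 0 p = 0"
  by (simp add: sl_def)

lemma sl_diff: "sl d (f - g) p = sl d f p - sl d g p"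
  using sl_add[of d f "-g" p] by (simp add: sl_uminus)

lemma sl_sum: "sl d (\<Sum>x\<in>S. F x) p = (\<Sum>x\<in>S. sl d (F x) p)"
  by (induction S rule: infinite_finite_induct) (auto simp: sl_add)

lemma neg1_pow_mult: "((-1) ^ r * f :: 'k::comm_ring_1 mpoly) = (if even r then f else - f)"
  by (induction r) auto

lemma sl_neg1: "sl d ((-1) ^ r * f) p = (-1) ^ r * sl d f p"
  by (simp add: neg1_pow_mult sl_uminus)

lemma lookup_single_mult:
  fixes g :: "'a::{comm_ring_1} mpoly"
  shows "Poly_Mapping.lookup (Poly_Mapping.single k 1 * g) m =
    (if \<exists>q. m = k + q then Poly_Mapping.lookup g (m - k) else 0)"
proof -
  have 1: "Poly_Mapping.lookup (Poly_Mapping.single k 1 * g) m = (\<Sum>q. Poly_Mapping.lookup g q when m = k + q)"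
  proof -
    have eq: "(\<lambda>a. (1 when k = a) * (\<Sum>q. Poly_Mapping.lookup g q when m = a + q))
       = (\<lambda>a. if k = a then (\<Sum>q. Poly_Mapping.lookup g q when m = a + q) else 0)"
      by (auto simp: when_def)
    show ?thesis unfolding lookup_mult lookup_single eq by simp
  qed
  show ?thesis
  proof (cases "\<exists>q. m = k + q")
    case True
    then obtain q0 where q0: "m = k + q0" by blast
    have "(\<lambda>q. Poly_Mapping.lookup g q when m = k + q) = (\<lambda>q. if q0 = q then Poly_Mapping.lookup g q else 0)"
      by (auto simp: q0 when_def)
    then show ?thesis using True 1 q0 by simp
  next
    case False
    then show ?thesis using 1 by (simp add: when_def)
  qed
qed

lemma sl_Var_mult:
  fixes h :: "'k::comm_ring_1 mpoly"
  shows "sl (Suc d) (Var t * h) p = p t * sl d h p"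
proof -
  let ?s = "\<lambda>q. mon t + q"
  have inj: "inj ?s" by (intro injI) simp
  have keys: "Poly_Mapping.keys (Var t * h) \<subseteq> ?s ` Poly_Mapping.keys h"
  proof
    fix m assume "m \<in> Poly_Mapping.keys (Var t * h)"
    then have "Poly_Mapping.lookup (Var t * h) m \<noteq> 0" by (simp add: in_keys_iff)
    then obtain q where q: "m = mon t + q" "Poly_Mapping.lookup h q \<noteq> 0"
      unfolding Var_def lookup_single_mult by (auto split: if_splits)
    then show "m \<in> ?s ` Poly_Mapping.keys h" by (auto simp: in_keys_iff)
  qed
  have fin: "finite (?s ` Poly_Mapping.keys h)" by simp
  have lk: "\<And>q. Poly_Mapping.lookup (Var t * h) (Poly_Mapping.single t (Suc 0) + q) = Poly_Mapping.lookup h q"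
    unfolding Var_def lookup_single_mult by auto
  have "sl (Suc d) (Var t * h) p = (\<Sum>m\<in>{m\<in>?s ` Poly_Mapping.keys h. mdeg m = Suc d}. Poly_Mapping.lookup (Var t * h) m * monv m p)"
    by (rule sl_sup[OF fin keys])
  also have "{m\<in>?s ` Poly_Mapping.keys h. mdeg m = Suc d} = ?s ` {q\<in>Poly_Mapping.keys h. mdeg q = d}"
    by (auto simp: mdeg_add)
  also have "(\<Sum>m\<in>?s ` {q\<in>Poly_Mapping.keys h. mdeg q = d}. Poly_Mapping.lookup (Var t * h) m * monv m p)
      = (\<Sum>q\<in>{q\<in>Poly_Mapping.keys h. mdeg q = d}. Poly_Mapping.lookup h q * (p t * monv q p))"
    by (subst sum.reindex) (auto intro: inj_on_subset[OF inj] simp: lk monv_add)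
  also have "\<dots> = p t * sl d h p"
    by (simp add: sl_def sum_distrib_left algebra_simps)
  finally show ?thesis .
qed

lemma sl1_add: "sl 1 h (\<lambda>i. P i + Q i) = sl 1 h P + sl 1 h Q"
proof -
  have "\<And>m. mdeg m = 1 \<Longrightarrow> monv m (\<lambda>i. P i + Q i) = monv m P + monv m Q"
  proof -
    fix m :: "nat \<Rightarrow>\<^sub>0 nat" assume "mdeg m = 1"
    then obtain i where "m = mon i" using mdeg1 by blast
    then show "monv m (\<lambda>i. P i + Q i) = monv m P + monv m Q" by simp
  qed
  then show ?thesis by (simp add: sl_def sum.distrib algebra_simps)
qed

lemma sl1_Var: "sl 1 (Var b :: 'k::comm_ring_1 mpoly) p = p b"
proof -
  have "{m. m = Poly_Mapping.single b (Suc 0) \<and> mdeg m = Suc 0} = {Poly_Mapping.single b (Suc 0)}" by auto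
  then show ?thesis by (simp add: sl_def Var_def)
qed

lemma poly_coeff_zero:
  fixes c :: "nat \<Rightarrow> 'k::field_char_0"
  assumes "\<forall>x. (\<Sum>i\<le>N. c i * x ^ i) = 0" "k \<le> N"
  shows "c k = 0"
proof -
  let ?q = "\<Sum>i\<le>N. monom (c i) i"
  have "\<forall>x. poly ?q x = 0" using assms(1) by (simp add: poly_sum poly_monom)
  then have "?q = 0" using poly_all_0_iff_0 by blast
  then have "coeff ?q k = 0" by simp
  moreover have "coeff ?q k = c k" using assms(2) by (simp add: coeff_sum coeff_monom)
  ultimately show ?thesis by simp
qed

lemma eval_scale:
  fixes f :: "'k::comm_ring_1 mpoly"
  assumes "\<forall>m\<in>Poly_Mapping.keys f. mdeg m \<le> N"
  shows "eval f (\<lambda>i. x * p i) = (\<Sum>d\<le>N. sl d f p * x ^ d)"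
proof -
  have "eval f (\<lambda>i. x * p i) = (\<Sum>m\<in>Poly_Mapping.keys f. Poly_Mapping.lookup f m * monv m p * x ^ mdeg m)"
    by (simp add: eval_mono monv_scale algebra_simps)
  also have "\<dots> = (\<Sum>d\<le>N. \<Sum>m\<in>{m\<in>Poly_Mapping.keys f. mdeg m = d}. Poly_Mapping.lookup f m * monv m p * x ^ mdeg m)"
    by (rule sum.group[symmetric]) (use assms in auto)
  also have "\<dots> = (\<Sum>d\<le>N. sl d f p * x ^ d)"
    by (intro sum.cong refl) (simp add: sl_def sum_distrib_right)
  finally show ?thesis .
qed

lemma sl_vanish:
  fixes f :: "'k::field_char_0 mpoly"
  assumes "\<forall>x. eval f (\<lambda>i. x * p i) = 0"
  shows "sl 2 f p = 0"
proof -
  let ?N = "(\<Sum>m\<in>Poly_Mapping.keys f. mdeg m) + 2"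
  have b: "\<forall>m\<in>Poly_Mapping.keys f. mdeg m \<le> ?N"
    using member_le_sum[of _ "Poly_Mapping.keys f" mdeg] by fastforce
  have "\<forall>x. (\<Sum>d\<le>?N. sl d f p * x ^ d) = 0" using assms eval_scale[OF b] by metis
  then show ?thesis by (rule poly_coeff_zero) simp
qed

definition rk :: "nat set \<Rightarrow> nat \<Rightarrow> nat" where
  "rk U t = card {u\<in>U. u < t}"

definition wedge1 :: "(nat \<Rightarrow> 'k::comm_ring_1) \<Rightarrow> (nat set \<Rightarrow> 'k) \<Rightarrow> nat set \<Rightarrow> 'k" where
  "wedge1 v W U = (\<Sum>t\<in>U. (-1) ^ rk U t * v t * W (U - {t}))"

fun wedgeL :: "(nat \<Rightarrow> 'k::comm_ring_1) list \<Rightarrow> nat set \<Rightarrow> 'k" where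
  "wedgeL [] = (\<lambda>S. if S = {} then 1 else 0)"
| "wedgeL (v # L) = wedge1 v (wedgeL L)"

lemma rk_remove_less: "finite U \<Longrightarrow> s \<in> U \<Longrightarrow> s < t \<Longrightarrow> rk U t = Suc (rk (U - {s}) t)"
proof -
  assume a: "finite U" "s \<in> U" "s < t"
  have "{u\<in>U. u < t} = insert s {u\<in>U - {s}. u < t}" using a by auto
  then show ?thesis unfolding rk_def using a by simp
qed

lemma rk_remove_ge: "s \<ge> t \<Longrightarrow> rk (U - {s}) t = rk U t"
proof -
  assume a: "s \<ge> t"
  have "{u\<in>U - {s}. u < t} = {u\<in>U. u < t}" using a by auto
  then show ?thesis unfolding rk_def by simp
qed

lemma sign_swap:
  assumes "finite U" "t \<in> U" "s \<in> U" "s \<noteq> t"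
  shows "((-1) ^ (rk U t + rk (U - {t}) s) :: 'k::comm_ring_1) = - ((-1) ^ (rk U s + rk (U - {s}) t))"
proof (cases "s < t")
  case True
  have "rk U t = Suc (rk (U - {s}) t)" using rk_remove_less assms True by blast
  moreover have "rk (U - {t}) s = rk U s" using rk_remove_ge True by simp
  ultimately show ?thesis by (simp add: algebra_simps)
next
  case False
  then have st: "t < s" using assms by simp
  have "rk U s = Suc (rk (U - {t}) s)" using rk_remove_less assms st by blast
  moreover have "rk (U - {s}) t = rk U t" using rk_remove_ge st by simp
  ultimately show ?thesis by (simp add: algebra_simps)
qed

lemma wedge1_infinite: "\<not> finite U \<Longrightarrow> wedge1 v W U = 0"
  by (simp add: wedge1_def)

lemma wedge1_expand2:
  "wedge1 x (wedge1 y W) U = (\<Sum>t\<in>U. \<Sum>s\<in>{s\<in>U. s \<noteq> t}.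
      (-1) ^ (rk U t + rk (U - {t}) s) * x t * y s * W (U - {t} - {s}))"
proof -
  have e: "\<And>t. {s\<in>U. s \<noteq> t} = U - {t}" by auto
  show ?thesis unfolding wedge1_def e
    by (intro sum.cong refl) (simp add: sum_distrib_left power_add algebra_simps)
qed

lemma wedge1_anticomm: "wedge1 x (wedge1 y W) U = - wedge1 y (wedge1 x W) U"
proof (cases "finite U")
  case False then show ?thesis by (simp add: wedge1_infinite)
next
  case fin: True
  have "wedge1 x (wedge1 y W) U = (\<Sum>s\<in>U. \<Sum>t\<in>{t\<in>U. s \<noteq> t}.
      (-1) ^ (rk U t + rk (U - {t}) s) * x t * y s * W (U - {t} - {s}))"
    unfolding wedge1_expand2 by (rule sum.swap_restrict[OF fin fin])
  also have "\<dots> = (\<Sum>s\<in>U. \<Sum>t\<in>{t\<in>U. t \<noteq> s}.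
      - ((-1) ^ (rk U s + rk (U - {s}) t) * y s * x t * W (U - {s} - {t})))"
  proof (intro sum.cong refl)
    fix s t assume "s \<in> U" "t \<in> {t\<in>U. t \<noteq> s}"
    then have st: "s \<in> U" "t \<in> U" "s \<noteq> t" by auto
    have e: "U - {t} - {s} = U - {s} - {t}" by auto
    have sg: "((-1) ^ (rk U t + rk (U - {t}) s) :: 'a) = - ((-1) ^ (rk U s + rk (U - {s}) t))"
      using sign_swap[OF fin st(2) st(1) st(3)] .
    show "(-1) ^ (rk U t + rk (U - {t}) s) * x t * y s * W (U - {t} - {s}) =
      - ((-1) ^ (rk U s + rk (U - {s}) t) * y s * x t * W (U - {s} - {t}))"
      by (simp only: e sg) (simp add: algebra_simps)
  next
    fix s show "{t\<in>U. s \<noteq> t} = {t\<in>U. t \<noteq> s}" by auto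
  qed
  also have "\<dots> = - wedge1 y (wedge1 x W) U"
    unfolding wedge1_expand2 by (simp add: sum_negf)
  finally show ?thesis .
qed

lemma wedge1_scale: "wedge1 v (\<lambda>S. c * W S) U = c * wedge1 v W U"
  by (simp add: wedge1_def sum_distrib_left algebra_simps)

lemma wedge1_neg: "wedge1 v (\<lambda>S. - W S) U = - wedge1 v W U"
  by (simp add: wedge1_def sum_negf)

lemma wedgeL_rot: "wedgeL (x # L) S = (-1) ^ length L * wedgeL (L @ [x]) S"
proof (induction L arbitrary: S)
  case Nil then show ?case by simp
next
  case (Cons y L)
  have "wedgeL (x # y # L) S = wedge1 x (wedge1 y (wedgeL L)) S" by simp
  also have "\<dots> = - wedge1 y (wedge1 x (wedgeL L)) S" by (rule wedge1_anticomm)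
  also have "wedge1 x (wedgeL L) = wedgeL (x # L)" by simp
  also have "wedgeL (x # L) = (\<lambda>S. (-1) ^ length L * wedgeL (L @ [x]) S)"
    using Cons by (intro ext) simp
  also have "- wedge1 y (\<lambda>S. (-1) ^ length L * wedgeL (L @ [x]) S) S
      = (-1) ^ length (y # L) * wedgeL ((y # L) @ [x]) S"
    by (simp add: wedge1_scale)
  finally show ?case .
qed

lemma wedge1_nz: "wedge1 v W U \<noteq> 0 \<Longrightarrow> finite U \<and> (\<exists>t\<in>U. v t \<noteq> 0 \<and> W (U - {t}) \<noteq> 0)"
proof -
  assume a: "wedge1 v W U \<noteq> 0"
  then have "finite U" using wedge1_infinite by blast
  moreover from a obtain t where "t \<in> U" "(-1) ^ rk U t * v t * W (U - {t}) \<noteq> 0"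
    unfolding wedge1_def using sum.neutral by force
  ultimately show ?thesis by (metis mult_zero_left mult_zero_right)
qed

lemma wedgeL_nz: "wedgeL L S \<noteq> 0 \<Longrightarrow> finite S \<and> card S = length L \<and> S \<subseteq> (\<Union>v\<in>set L. {i. v i \<noteq> 0})"
proof (induction L arbitrary: S)
  case Nil then show ?case by (simp split: if_splits)
next
  case (Cons v L)
  then have "wedge1 v (wedgeL L) S \<noteq> 0" by simp
  from wedge1_nz[OF this] obtain t where t: "finite S" "t \<in> S" "v t \<noteq> 0" "wedgeL L (S - {t}) \<noteq> 0"
    by blast
  from Cons.IH[OF t(4)] have "card (S - {t}) = length L" "S - {t} \<subseteq> (\<Union>v\<in>set L. {i. v i \<noteq> 0})"
    by auto
  moreover have "card S > 0" using t by (auto simp: card_gt_0_iff)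
  ultimately show ?case using t by (auto simp: card_Diff_singleton_if split: if_splits)
qed

definition unitv :: "nat \<Rightarrow> nat \<Rightarrow> 'k::comm_ring_1" where
  "unitv c = (\<lambda>i. if i = c then 1 else 0)"

lemma wedge1_unit_nz: "wedge1 (unitv c) W U \<noteq> 0 \<Longrightarrow> c \<in> U \<and> W (U - {c}) \<noteq> 0"
  using wedge1_nz[of "unitv c" W U] by (auto simp: unitv_def split: if_splits)

inductive good :: "(nat \<Rightarrow> 'k::comm_ring_1) list \<Rightarrow> nat set \<Rightarrow> bool" where
  gnil: "good [] {}"
| gone: "x c \<noteq> 0 \<Longrightarrow> (\<forall>i. i \<noteq> c \<longrightarrow> x i = 0) \<Longrightarrow> c \<notin> C \<Longrightarrow> good L C \<Longrightarrow> good (x # L) (insert c C)"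
| gtwo: "j \<noteq> k \<Longrightarrow> j \<notin> C \<Longrightarrow> k \<notin> C \<Longrightarrow> (\<forall>i. i \<noteq> j \<and> i \<noteq> k \<longrightarrow> x i = 0 \<and> y i = 0) \<Longrightarrow>
     x j * y k \<noteq> x k * y j \<Longrightarrow> good L C \<Longrightarrow> good (x # y # L) (insert j (insert k C))"

lemma sum_sub_support: "finite A \<Longrightarrow> B \<subseteq> A \<Longrightarrow> (\<forall>t\<in>A. t \<notin> B \<longrightarrow> f t = 0) \<Longrightarrow> sum f A = sum f B"
  by (rule sum.mono_neutral_right) auto

lemma good_nz:
  fixes L :: "(nat \<Rightarrow> 'k::idom) list"
  shows "good L C \<Longrightarrow> finite C \<and> wedgeL L C \<noteq> 0"
proof (induction rule: good.induct)
  case gnil then show ?case by simp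
next
  case (gone x c C L)
  let ?S = "insert c C"
  have fin: "finite ?S" using gone by simp
  have "wedge1 x (wedgeL L) ?S = (\<Sum>t\<in>{c}. (-1) ^ rk ?S t * x t * wedgeL L (?S - {t}))"
    unfolding wedge1_def using gone(2) by (intro sum_sub_support[OF fin]) auto
  also have "\<dots> = (-1) ^ rk ?S c * x c * wedgeL L C" using gone(3) by simp
  finally show ?case using gone by simp
next
  case (gtwo j k C x y L)
  let ?S = "insert j (insert k C)"
  have fin: "finite ?S" using gtwo by simp
  have jk: "j \<in> ?S" "k \<in> ?S" by auto
  have C1: "?S - {j} - {k} = C" "?S - {k} - {j} = C" using gtwo by auto
  have fin2: "finite (?S - {j})" "finite (?S - {k})" using fin by auto
  have in1: "wedge1 y (wedgeL L) (?S - {j}) = (\<Sum>s\<in>{k}. (-1) ^ rk (?S - {j}) s * y s * wedgeL L (?S - {j} - {s}))"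
    unfolding wedge1_def using gtwo(1,4) by (intro sum_sub_support[OF fin2(1)]) auto
  have in2: "wedge1 y (wedgeL L) (?S - {k}) = (\<Sum>s\<in>{j}. (-1) ^ rk (?S - {k}) s * y s * wedgeL L (?S - {k} - {s}))"
    unfolding wedge1_def using gtwo(1,4) by (intro sum_sub_support[OF fin2(2)]) auto
  have "wedgeL (x # y # L) ?S = (\<Sum>t\<in>{j,k}. (-1) ^ rk ?S t * x t * wedge1 y (wedgeL L) (?S - {t}))"
    unfolding wedgeL.simps wedge1_def[of x] using gtwo(4) by (intro sum_sub_support[OF fin]) auto
  also have "\<dots> = (-1) ^ rk ?S j * x j * wedge1 y (wedgeL L) (?S - {j}) + (-1) ^ rk ?S k * x k * wedge1 y (wedgeL L) (?S - {k})"
    using gtwo(1) by simp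
  also have "\<dots> = (-1) ^ (rk ?S j + rk (?S - {j}) k) * x j * y k * wedgeL L C
                 + (-1) ^ (rk ?S k + rk (?S - {k}) j) * x k * y j * wedgeL L C"
    unfolding in1 in2 using C1 by (simp add: power_add algebra_simps)
  also have "(-1) ^ (rk ?S k + rk (?S - {k}) j) = - ((-1) ^ (rk ?S j + rk (?S - {j}) k) :: 'k)"
    using sign_swap[OF fin jk(2) jk(1)] gtwo(1) by simp
  finally have "wedgeL (x # y # L) ?S = (-1) ^ (rk ?S j + rk (?S - {j}) k) * (x j * y k - x k * y j) * wedgeL L C"
    by (simp add: algebra_simps)
  then show ?case using gtwo by simp
qed

definition beta :: "(nat \<Rightarrow> 'k::comm_ring_1) \<Rightarrow> (nat \<Rightarrow> 'k) \<Rightarrow> 'k mpoly \<Rightarrow> 'k" where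
  "beta P Q f = sl 2 f (\<lambda>i. P i + Q i) - sl 2 f P - sl 2 f Q"

lemma beta_add: "beta P Q (f + g) = beta P Q f + beta P Q g"
  by (simp add: beta_def sl_add)

lemma beta_zero[simp]: "beta P Q 0 = 0"
  by (simp add: beta_def)

lemma beta_sum: "beta P Q (\<Sum>x\<in>S. F x) = (\<Sum>x\<in>S. beta P Q (F x))"
  by (simp add: beta_def sl_sum sum_subtractf)

lemma beta_neg1: "beta P Q ((-1) ^ r * f) = (-1) ^ r * beta P Q f"
  by (simp only: beta_def sl_neg1) (simp add: algebra_simps)

lemma beta_Var_mult: "beta P Q (Var t * h) = P t * sl 1 h Q + Q t * sl 1 h P"
proof -
  have eq: "\<And>p. sl 2 (Var t * h) p = p t * sl 1 h p"
    using sl_Var_mult[of 1 t h] by (simp add: numeral_2_eq_2)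
  show ?thesis unfolding beta_def by (simp only: eq sl1_add) (simp add: algebra_simps)
qed

definition Wc :: "nat \<Rightarrow> (nat \<Rightarrow> nat \<Rightarrow> 'k::comm_ring_1) \<Rightarrow> nat \<Rightarrow> nat set \<Rightarrow> 'k" where
  "Wc m Nn k = (\<lambda>S. (-1) ^ ((m - 1) * k) * wedgeL (map (\<lambda>i. Nn (k + 1 + i)) [0..<m - 2]) S)"

definition psi :: "nat \<Rightarrow> nat \<Rightarrow> (nat \<Rightarrow> nat \<Rightarrow> 'k::comm_ring_1) \<Rightarrow> (nat set \<Rightarrow> 'k mpoly) \<Rightarrow> 'k" where
  "psi n m Nn x = (\<Sum>k<m. \<Sum>T\<in>Pow {0..n}. Wc m Nn k T * beta (Nn (k + m - 1)) (Nn k) (x T))"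

lemma cocycle:
  assumes m: "m \<ge> 2"
  shows "wedge1 (Nn (k + m - 1)) (Wc m Nn k) U + wedge1 (Nn (k + 1)) (Wc m Nn (k + 1)) U = 0"
proof -
  let ?f = "\<lambda>i. Nn (k + 1 + i)"
  have l1: "map ?f [0..<m - 2] @ [Nn (k + m - 1)] = map ?f [0..<Suc (m - 2)]"
  proof -
    have e: "Nn (k + m - 1) = Nn (k + 1 + (m - 2))" using m by (intro arg_cong[where f=Nn]) arith
    show ?thesis unfolding e by simp
  qed
  have l2: "Nn (k + 1) # map (\<lambda>i. Nn (k + 1 + 1 + i)) [0..<m - 2] = map ?f [0..<Suc (m - 2)]"
    by (simp add: map_upt_Suc del: upt_Suc)
  have A: "wedge1 (Nn (k + m - 1)) (Wc m Nn k) U =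
      (-1) ^ ((m - 1) * k) * ((-1) ^ (m - 2) * wedgeL (map ?f [0..<Suc (m - 2)]) U)"
    unfolding Wc_def wedge1_scale using wedgeL_rot[of "Nn (k + m - 1)" "map ?f [0..<m - 2]" U] l1
    by simp
  have B: "wedge1 (Nn (k + 1)) (Wc m Nn (k + 1)) U =
      (-1) ^ ((m - 1) * (k + 1)) * wedgeL (map ?f [0..<Suc (m - 2)]) U"
    unfolding Wc_def wedge1_scale using l2 by (metis wedgeL.simps(2))
  have s: "((-1) :: 'a) ^ ((m - 1) * (k + 1)) = - ((-1) ^ ((m - 1) * k) * (-1) ^ (m - 2))"
  proof -
    have d: "(m - 1) * (k + 1) = (m - 1) * k + (m - 1)" by (simp only: distrib_left mult_1_right)
    have "m - 1 = Suc (m - 2)" using m by arith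
    with d have h: "(m - 1) * (k + 1) = (m - 1) * k + Suc (m - 2)" by metis
    show ?thesis by (simp only: h power_add power_Suc) simp
  qed
  show ?thesis unfolding A B s by (simp add: algebra_simps)
qed

lemma reindex_pairs:
  assumes A: "finite A"
  shows "(\<Sum>T\<in>Pow A. \<Sum>t\<in>A - T. G T t) = (\<Sum>U\<in>Pow A. \<Sum>t\<in>U. G (U - {t}) t)"
proof -
  have fa: "\<forall>T\<in>Pow A. finite (A - T)" "\<forall>U\<in>Pow A. finite U" using A by (auto intro: finite_subset)
  have "(\<Sum>T\<in>Pow A. \<Sum>t\<in>A - T. G T t) = (\<Sum>(T, t)\<in>Sigma (Pow A) (\<lambda>T. A - T). G T t)"
    using A fa by (simp add: sum.Sigma)
  also have "\<dots> = (\<Sum>(U, t)\<in>Sigma (Pow A) (\<lambda>U. U). G (U - {t}) t)"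
    by (rule sum.reindex_bij_witness[where i="\<lambda>(U, t). (U - {t}, t)" and j="\<lambda>(T, t). (insert t T, t)"])
       (auto simp: insert_absorb)
  also have "\<dots> = (\<Sum>U\<in>Pow A. \<Sum>t\<in>U. G (U - {t}) t)"
    using A fa by (simp add: sum.Sigma)
  finally show ?thesis .
qed

lemma rk_insert_self: "rk (insert t T) t = card {u\<in>T. u < t}"
  unfolding rk_def by (rule arg_cong[where f=card]) auto

lemma beta_kdiff:
  assumes "T \<subseteq> {0..n}"
  shows "beta P Q (kdiff n b T) = (\<Sum>t\<in>{0..n} - T. (-1) ^ rk (insert t T) t *
            (P t * sl 1 (b (insert t T)) Q + Q t * sl 1 (b (insert t T)) P))"
  unfolding kdiff_def using assms
  by (simp add: beta_sum mult.assoc beta_neg1 beta_Var_mult rk_insert_self)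

lemma sum_shift_periodic:
  fixes f :: "nat \<Rightarrow> 'a::ab_group_add"
  assumes "f m = f 0"
  shows "(\<Sum>k<m. f k) = (\<Sum>k<m. f (Suc k))"
proof -
  have a: "(\<Sum>k<Suc m. f k) = f 0 + (\<Sum>k<m. f (Suc k))" by (rule sum.lessThan_Suc_shift)
  have b: "(\<Sum>k<Suc m. f k) = (\<Sum>k<m. f k) + f m" by simp
  from a b assms show ?thesis by (simp add: add.commute)
qed

lemma psi_kdiff:
  assumes m: "m \<ge> 2" and per: "\<And>i. Nn (i + m) = Nn i"
  shows "psi n m Nn (kdiff n b) = 0"
proof -
  let ?A = "{0..n::nat}"
  let ?W = "Wc m Nn"
  let ?P = "\<lambda>k. Nn (k + m - 1)"
  let ?F = "\<lambda>U p. sl 1 (b U) p"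
  have finA: "finite ?A" by simp
  have step: "\<And>k. (\<Sum>T\<in>Pow ?A. ?W k T * beta (?P k) (Nn k) (kdiff n b T))
     = (\<Sum>U\<in>Pow ?A. wedge1 (?P k) (?W k) U * ?F U (Nn k) + wedge1 (Nn k) (?W k) U * ?F U (?P k))"
  proof -
    fix k
    have "(\<Sum>T\<in>Pow ?A. ?W k T * beta (?P k) (Nn k) (kdiff n b T))
       = (\<Sum>T\<in>Pow ?A. \<Sum>t\<in>?A - T. ?W k T * ((-1) ^ rk (insert t T) t *
            (?P k t * ?F (insert t T) (Nn k) + Nn k t * ?F (insert t T) (?P k))))"
      by (intro sum.cong refl) (simp add: beta_kdiff sum_distrib_left)
    also have "\<dots> = (\<Sum>U\<in>Pow ?A. \<Sum>t\<in>U. ?W k (U - {t}) * ((-1) ^ rk (insert t (U - {t})) t *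
            (?P k t * ?F (insert t (U - {t})) (Nn k) + Nn k t * ?F (insert t (U - {t})) (?P k))))"
      by (rule reindex_pairs[OF finA])
    also have "\<dots> = (\<Sum>U\<in>Pow ?A. \<Sum>t\<in>U. ?W k (U - {t}) * ((-1) ^ rk U t *
            (?P k t * ?F U (Nn k) + Nn k t * ?F U (?P k))))"
      by (intro sum.cong refl) (simp add: insert_absorb)
    also have "\<dots> = (\<Sum>U\<in>Pow ?A. wedge1 (?P k) (?W k) U * ?F U (Nn k) + wedge1 (Nn k) (?W k) U * ?F U (?P k))"
    proof (intro sum.cong refl)
      fix U
      have "wedge1 (?P k) (?W k) U * ?F U (Nn k) + wedge1 (Nn k) (?W k) U * ?F U (?P k)
        = (\<Sum>t\<in>U. (-1) ^ rk U t * ?P k t * ?W k (U - {t}) * ?F U (Nn k)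
             + (-1) ^ rk U t * Nn k t * ?W k (U - {t}) * ?F U (?P k))"
        unfolding wedge1_def by (simp add: sum_distrib_right sum.distrib)
      also have "\<dots> = (\<Sum>t\<in>U. ?W k (U - {t}) * ((-1) ^ rk U t *
            (?P k t * ?F U (Nn k) + Nn k t * ?F U (?P k))))"
        by (intro sum.cong refl) (simp add: algebra_simps)
      finally show "(\<Sum>t\<in>U. ?W k (U - {t}) * ((-1) ^ rk U t *
            (?P k t * ?F U (Nn k) + Nn k t * ?F U (?P k)))) =
        wedge1 (?P k) (?W k) U * ?F U (Nn k) + wedge1 (Nn k) (?W k) U * ?F U (?P k)" by simp
    qed
    finally show "(\<Sum>T\<in>Pow ?A. ?W k T * beta (?P k) (Nn k) (kdiff n b T))
     = (\<Sum>U\<in>Pow ?A. wedge1 (?P k) (?W k) U * ?F U (Nn k) + wedge1 (Nn k) (?W k) U * ?F U (?P k))" .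
  qed
  have Wper: "?W (k + m) = ?W k" for k
  proof -
    have "(m - 1) * (k + m) = (m - 1) * k + (m - 1) * m" by (simp add: distrib_left)
    moreover have "even ((m - 1) * m)" by simp
    ultimately have s: "((-1)::'a) ^ ((m - 1) * (k + m)) = (-1) ^ ((m - 1) * k)"
      by (simp add: power_add)
    have "\<And>i. Nn (k + m + 1 + i) = Nn (k + 1 + i)" using per by (metis add.assoc add.commute)
    then show ?thesis unfolding Wc_def s by simp
  qed
  have inner: "(\<Sum>k<m. wedge1 (?P k) (?W k) U * ?F U (Nn k) + wedge1 (Nn k) (?W k) U * ?F U (?P k)) = 0" for U
  proof -
    let ?B = "\<lambda>k. wedge1 (Nn k) (?W k) U * ?F U (?P k)"
    have Bm: "?B m = ?B 0"
    proof -
      have "Nn m = Nn 0" using per[of 0] by simp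
      moreover have "?P m = ?P 0" using per[of "m - 1"] m by (simp add: add.commute)
      moreover have "?W m = ?W 0" using Wper[of 0] by simp
      ultimately show ?thesis by simp
    qed
    obtain m' where m': "m = Suc m'" using m by (cases m) auto
    have shift: "(\<Sum>k<m. ?B k) = (\<Sum>k<m. ?B (Suc k))"
      by (rule sum_shift_periodic[of ?B, OF Bm])
    have Pk1: "?P (Suc k) = Nn k" for k
    proof -
      have "Suc k + m - 1 = k + m" by simp
      then show ?thesis using per by simp
    qed
    have "(\<Sum>k<m. wedge1 (?P k) (?W k) U * ?F U (Nn k) + ?B k)
        = (\<Sum>k<m. wedge1 (?P k) (?W k) U * ?F U (Nn k)) + (\<Sum>k<m. ?B (Suc k))"
      by (simp only: sum.distrib shift)
    also have "\<dots> = (\<Sum>k<m. (wedge1 (?P k) (?W k) U + wedge1 (Nn (k + 1)) (?W (k + 1)) U) * ?F U (Nn k))"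
      by (simp add: sum.distrib[symmetric] algebra_simps per)
    also have "\<dots> = 0"
    proof (intro sum.neutral ballI)
      fix k
      have "wedge1 (?P k) (?W k) U + wedge1 (Nn (k + 1)) (?W (k + 1)) U = 0" by (rule cocycle[OF m])
      then show "(wedge1 (?P k) (?W k) U + wedge1 (Nn (k + 1)) (?W (k + 1)) U) * ?F U (Nn k) = 0" by simp
    qed
    finally show ?thesis .
  qed
  have "psi n m Nn (kdiff n b) = (\<Sum>k<m. \<Sum>U\<in>Pow ?A. wedge1 (?P k) (?W k) U * ?F U (Nn k) + wedge1 (Nn k) (?W k) U * ?F U (?P k))"
    unfolding psi_def using step by simp
  also have "\<dots> = (\<Sum>U\<in>Pow ?A. \<Sum>k<m. wedge1 (?P k) (?W k) U * ?F U (Nn k) + wedge1 (Nn k) (?W k) U * ?F U (?P k))"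
    by (rule sum.swap)
  also have "\<dots> = 0" using inner by simp
  finally show ?thesis .
qed

lemma psi_add: "psi n m Nn (\<lambda>T. x T + y T) = psi n m Nn x + psi n m Nn y"
  by (simp add: psi_def beta_add distrib_left sum.distrib)

lemma psi_contra:
  fixes I :: "'k::comm_ring_1 mpoly set"
  assumes m: "m \<ge> 2" and per: "\<And>i. Nn (i + m) = Nn i"
    and T0: "T0 \<subseteq> {0..n}" and kap: "\<kappa> < m"
    and hb: "\<And>k. k < m \<Longrightarrow> beta (Nn (k + m - 1)) (Nn k) (Var a * Var b) = (if k = \<kappa> then 1 else 0)"
    and hW: "Wc m Nn \<kappa> T0 \<noteq> 0"
    and hI: "\<And>k f. k < m \<Longrightarrow> f \<in> I \<Longrightarrow> beta (Nn (k + m - 1)) (Nn k) f = 0"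
    and hc: "\<And>T. c T = (if T = T0 then Var a * Var b else 0)"
    and dec: "\<And>T. c T = kdiff n bb T + aa T" and aI: "\<And>T. aa T \<in> I"
  shows False
proof -
  have "psi n m Nn c = psi n m Nn (\<lambda>T. kdiff n bb T + aa T)"
  proof -
    have "c = (\<lambda>T. kdiff n bb T + aa T)" using dec by (rule ext)
    then show ?thesis by simp
  qed
  also have "\<dots> = psi n m Nn (kdiff n bb) + psi n m Nn aa" by (rule psi_add)
  also have "psi n m Nn (kdiff n bb) = 0" using psi_kdiff[of m Nn] m per by blast
  also have "psi n m Nn aa = 0" unfolding psi_def using hI aI by simp
  finally have z: "psi n m Nn c = 0" by simp
  have "psi n m Nn c = (\<Sum>k<m. Wc m Nn k T0 * beta (Nn (k + m - 1)) (Nn k) (Var a * Var b))"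
    unfolding psi_def
  proof (intro sum.cong refl)
    fix k
    have "(\<Sum>T\<in>Pow {0..n}. Wc m Nn k T * beta (Nn (k + m - 1)) (Nn k) (c T))
        = (\<Sum>T\<in>{T0}. Wc m Nn k T * beta (Nn (k + m - 1)) (Nn k) (c T))"
      using T0 by (intro sum.mono_neutral_right) (auto simp: hc)
    then show "(\<Sum>T\<in>Pow {0..n}. Wc m Nn k T * beta (Nn (k + m - 1)) (Nn k) (c T)) =
      Wc m Nn k T0 * beta (Nn (k + m - 1)) (Nn k) (Var a * Var b)" by (simp add: hc)
  qed
  also have "\<dots> = (\<Sum>k<m. if k = \<kappa> then Wc m Nn k T0 else 0)"
  proof (intro sum.cong refl)
    fix k assume "k \<in> {..<m}"
    then show "Wc m Nn k T0 * beta (Nn (k + m - 1)) (Nn k) (Var a * Var b) = (if k = \<kappa> then Wc m Nn k T0 else 0)"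
      using hb[of k] by simp
  qed
  also have "\<dots> = Wc m Nn \<kappa> T0" using kap by simp
  finally show False using z hW by simp
qed

lemma eval_sup: "finite K \<Longrightarrow> Poly_Mapping.keys f \<subseteq> K \<Longrightarrow> eval f p = (\<Sum>m\<in>K. Poly_Mapping.lookup f m * monv m p)"
  unfolding eval_mono by (rule sum.mono_neutral_left) (auto simp: in_keys_iff)

lemma eval_add: "eval (f + g) p = eval f p + eval g p"
proof -
  let ?K = "Poly_Mapping.keys f \<union> Poly_Mapping.keys g"
  have f: "finite ?K" by simp
  have k: "Poly_Mapping.keys (f + g) \<subseteq> ?K" by (rule keys_add)
  show ?thesis
    by (simp add: eval_sup[OF f k] eval_sup[OF f, of f] eval_sup[OF f, of g] lookup_add sum.distrib algebra_simps)
qed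

lemma eval_uminus: "eval (- f) p = - eval f p"
  by (simp add: eval_mono sum_negf)

lemma eval_diff: "eval (f - g) p = eval f p - eval g p"
  using eval_add[of f "- g" p] by (simp add: eval_uminus)

lemma eval_zero[simp]: "eval 0 p = 0"
  by (simp add: eval_def)

lemma eval_single1: "eval (Poly_Mapping.single m (1::'k::comm_ring_1)) p = monv m p"
  by (simp add: eval_mono)

lemma eval_Var[simp]: "eval (Var i :: 'k::comm_ring_1 mpoly) p = p i"
  by (simp add: Var_def eval_single1)

lemma Var_mult_Var: "(Var i * Var j :: 'k::comm_ring_1 mpoly) = Poly_Mapping.single (mon i + mon j) 1"
  by (simp add: Var_def mult_single)

lemma polyS_add: assumes "f \<in> polyS n" "g \<in> polyS n" shows "f + g \<in> polyS n"
proof -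
  have "\<And>m. m \<in> Poly_Mapping.keys (f + g) \<Longrightarrow> Poly_Mapping.keys m \<subseteq> {0..n}"
  proof -
    fix m assume "m \<in> Poly_Mapping.keys (f + g)"
    then have "m \<in> Poly_Mapping.keys f \<or> m \<in> Poly_Mapping.keys g" using keys_add[of f g] by blast
    then show "Poly_Mapping.keys m \<subseteq> {0..n}" using assms unfolding polyS_def by auto
  qed
  then show ?thesis unfolding polyS_def by simp
qed

lemma VI_zero: "0 \<in> vanishing_ideal n X"
  by (simp add: vanishing_ideal_def polyS_def)

lemma VI_add: "f \<in> vanishing_ideal n X \<Longrightarrow> g \<in> vanishing_ideal n X \<Longrightarrow> f + g \<in> vanishing_ideal n X"
  by (simp add: vanishing_ideal_def polyS_add eval_add)

lemma VI_uminus: "f \<in> vanishing_ideal n X \<Longrightarrow> - f \<in> vanishing_ideal n X"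
  by (simp add: vanishing_ideal_def polyS_def eval_uminus)

lemma VI_neg1: "f \<in> vanishing_ideal n X \<Longrightarrow> (-1) ^ r * f \<in> vanishing_ideal n X"
  by (simp add: neg1_pow_mult VI_uminus)

lemma VI_sum: "(\<And>t. t \<in> S \<Longrightarrow> F t \<in> vanishing_ideal n X) \<Longrightarrow> (\<Sum>t\<in>S. F t) \<in> vanishing_ideal n X"
  by (induction S rule: infinite_finite_induct) (auto simp: VI_zero VI_add)

lemma beta_vanish:
  fixes f :: "'k::field_char_0 mpoly"
  assumes f: "f \<in> vanishing_ideal n X"
    and P: "\<And>x. (\<lambda>i. x * P i) \<in> X" and Q: "\<And>x. (\<lambda>i. x * Q i) \<in> X"
    and PQ: "\<And>x. (\<lambda>i. x * (P i + Q i)) \<in> X"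
  shows "beta P Q f = 0"
proof -
  have ev: "\<And>p. p \<in> X \<Longrightarrow> eval f p = 0" using f by (simp add: vanishing_ideal_def)
  have "sl 2 f P = 0" by (rule sl_vanish, rule allI, rule ev, rule P)
  moreover have "sl 2 f Q = 0" by (rule sl_vanish, rule allI, rule ev, rule Q)
  moreover have "sl 2 f (\<lambda>i. P i + Q i) = 0" by (rule sl_vanish, rule allI, rule ev, rule PQ)
  ultimately show ?thesis by (simp add: beta_def)
qed

lemma gens_form: assumes "g \<in> Iv_gens V E n lab v" shows "(\<exists>i. g = Var i) \<or> (\<exists>j k. g = Var j - Var k)"
proof (cases "gdeg E v = 3")
  case True
  have "g \<in> {Var i |i. i \<le> n \<and>
           (\<forall>j k. lab ` {e \<in> tedges V E. v \<in> e} = {Lab j, Lab k, Dif j k} \<longrightarrow> i \<noteq> j \<and> i \<noteq> k)}"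
    using assms unfolding Iv_gens_def if_P[OF True] .
  then show ?thesis by blast
next
  case False
  have "g \<in> {Var i | i. i \<le> n \<and> (\<forall>e\<in>tedges V E. v \<in> e \<longrightarrow> i \<notin> lab_idx (lab e))}
        \<union> {Var j - Var k | j k. \<exists>e\<in>tedges V E. v \<in> e \<and> lab e = Dif j k}"
    using assms unfolding Iv_gens_def if_not_P[OF False] .
  then show ?thesis by blast
qed

lemma gens_linear:
  "g \<in> Iv_gens V E n lab v \<Longrightarrow>
     (eval g (\<lambda>i. p i + q i) = eval g p + eval g q) \<and> (eval g (\<lambda>i. x * p i) = x * eval g p)"
proof -
  assume "g \<in> Iv_gens V E n lab v"
  then consider i where "g = Var i" | j k where "g = Var j - Var k" using gens_form by metis
  then show ?thesis
  proof cases
    case 1 then show ?thesis by simp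
  next
    case 2
    have "eval (Var j - Var k) (\<lambda>i. p i + q i) = eval (Var j - Var k) p + eval (Var j - Var k) q"
      "eval (Var j - Var k) (\<lambda>i. x * p i) = x * eval (Var j - Var k) p"
      by (simp_all only: eval_diff eval_Var) (simp_all add: algebra_simps)
    then show ?thesis unfolding 2 by blast
  qed
qed

lemma Lv_add: fixes p :: "nat \<Rightarrow> 'k::comm_ring_1" assumes "p \<in> Lv_cone V E n lab v" "q \<in> Lv_cone V E n lab v"
  shows "(\<lambda>i. p i + q i) \<in> Lv_cone V E n lab v"
proof -
  have "\<And>g. g \<in> (Iv_gens V E n lab v :: 'k mpoly set) \<Longrightarrow> eval g (\<lambda>i. p i + q i) = 0"
  proof -
    fix g assume g: "g \<in> (Iv_gens V E n lab v :: 'k mpoly set)"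
    then have "eval g p = 0" "eval g q = 0" using assms unfolding Lv_cone_def by auto
    then show "eval g (\<lambda>i. p i + q i) = 0" using gens_linear[OF g] by simp
  qed
  moreover have "\<forall>i>n. p i + q i = 0" using assms unfolding Lv_cone_def by auto
  ultimately show ?thesis unfolding Lv_cone_def by simp
qed

lemma Lv_scale: fixes p :: "nat \<Rightarrow> 'k::comm_ring_1" assumes "p \<in> Lv_cone V E n lab v" shows "(\<lambda>i. x * p i) \<in> Lv_cone V E n lab v"
proof -
  have "\<And>g. g \<in> (Iv_gens V E n lab v :: 'k mpoly set) \<Longrightarrow> eval g (\<lambda>i. x * p i) = 0"
  proof -
    fix g assume g: "g \<in> (Iv_gens V E n lab v :: 'k mpoly set)"
    then have "eval g p = 0" using assms unfolding Lv_cone_def by auto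
    then show "eval g (\<lambda>i. x * p i) = 0" using gens_linear[OF g] by simp
  qed
  moreover have "\<forall>i>n. x * p i = 0" using assms unfolding Lv_cone_def by auto
  ultimately show ?thesis unfolding Lv_cone_def by simp
qed

lemma Lv_CG: "v \<in> V \<Longrightarrow> p \<in> Lv_cone V E n lab v \<Longrightarrow> p \<in> CG_cone V E n lab"
  unfolding CG_cone_def by (rule UN_I)

lemma Lv_Var:
  fixes p :: "nat \<Rightarrow> 'k::comm_ring_1"
  assumes "p \<in> Lv_cone V E n lab v" "(Var i :: 'k mpoly) \<in> Iv_gens V E n lab v"
  shows "p i = 0"
proof -
  have "\<forall>f\<in>(Iv_gens V E n lab v :: 'k mpoly set). eval f p = 0" using assms(1) unfolding Lv_cone_def by simp
  then have "eval (Var i :: 'k mpoly) p = 0" using assms(2) by (rule bspec)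
  then show ?thesis by simp
qed

fun nodev :: "label \<Rightarrow> nat \<Rightarrow> 'k::comm_ring_1" where
  "nodev (Lab i) = unitv i"
| "nodev (Dif j k) = (\<lambda>x. if x = j \<or> x = k then 1 else 0)"

lemma nodev_supp: "nodev l i \<noteq> (0::'k::comm_ring_1) \<Longrightarrow> i \<in> lab_idx l"
  by (cases l) (auto simp: unitv_def split: if_splits)

lemma card2_eq: "finite e \<Longrightarrow> card e \<le> 2 \<Longrightarrow> u \<in> e \<Longrightarrow> x \<in> e \<Longrightarrow> u \<noteq> x \<Longrightarrow> e = {u, x}"
proof -
  assume a: "finite e" "card e \<le> 2" "u \<in> e" "x \<in> e" "u \<noteq> x"
  have "{u, x} \<subseteq> e" using a by auto
  moreover have "card {u, x} = 2" using a by simp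
  ultimately show ?thesis using a by (metis card_seteq)
qed

locale gsetup =
  fixes V :: "'v set" and E :: "'v set set" and n :: nat and lab :: "'v set \<Rightarrow> label"
  assumes G: "graph_conditions V E" and adm: "admissible V E n lab"
begin

abbreviation "deg3 x \<equiv> gdeg E x = 3"
abbreviation "TE \<equiv> tedges V E"

lemma finV: "finite V" using G by (simp add: graph_conditions_def graph_def)

lemma Esub: "e \<in> E \<Longrightarrow> e \<subseteq> V \<and> card e = 2"
  using G by (simp add: graph_conditions_def graph_def)

lemma finE: "finite E"
proof -
  have "E \<subseteq> Pow V" using Esub by auto
  then show ?thesis using finV by (metis finite_Pow_iff finite_subset)
qed

lemma adjD: "adj E x y \<Longrightarrow> x \<noteq> y \<and> {x, y} \<in> E \<and> x \<in> V \<and> y \<in> V"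
  using Esub[of "{x, y}"] by (auto simp: adj_def card_2_iff doubleton_eq_iff)

lemma adj_sym: "adj E x y \<Longrightarrow> adj E y x"
  by (simp add: adj_def insert_commute)

lemma deg_le3: "x \<in> V \<Longrightarrow> gdeg E x \<le> 3"
  using G by (simp add: graph_conditions_def)

lemma far1: "adj E x y \<Longrightarrow> deg3 x \<Longrightarrow> deg3 y \<Longrightarrow> False"
proof -
  assume a: "adj E x y" "deg3 x" "deg3 y"
  have w: "walk V E [x, y]" using a adjD[OF a(1)] by (auto simp: walk_def nth_Cons split: nat.splits)
  have "deg3_far V E" using G by (simp add: graph_conditions_def)
  then show False using w a adjD[OF a(1)] unfolding deg3_far_def by force
qed

lemma far2: "adj E x y \<Longrightarrow> adj E y z \<Longrightarrow> x \<noteq> z \<Longrightarrow> deg3 x \<Longrightarrow> deg3 z \<Longrightarrow> False"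
proof -
  assume a: "adj E x y" "adj E y z" "x \<noteq> z" "deg3 x" "deg3 z"
  have w: "walk V E [x, y, z]" using a adjD[OF a(1)] adjD[OF a(2)]
    by (auto simp: walk_def nth_Cons less_Suc_eq split: nat.splits)
  have "deg3_far V E" using G by (simp add: graph_conditions_def)
  then show False using w a adjD[OF a(1)] adjD[OF a(2)] unfolding deg3_far_def by force
qed

lemma triangle: "adj E x y \<Longrightarrow> adj E y z \<Longrightarrow> adj E x z \<Longrightarrow> False"
proof -
  assume a: "adj E x y" "adj E y z" "adj E x z"
  have "triangle_free V E" using G by (simp add: graph_conditions_def)
  then show False using a adjD[OF a(1)] adjD[OF a(2)] unfolding triangle_free_def by blast
qed

lemma TE_cases: "e \<in> TE \<Longrightarrow> e \<in> E \<or> (\<exists>y. e = {y} \<and> y \<in> V \<and> gdeg E y = 1)"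
  by (auto simp: tedges_def)

lemma TE_fin: "e \<in> TE \<Longrightarrow> finite e \<and> card e \<le> 2"
  using TE_cases[of e] Esub[of e] by (auto intro: card_ge_0_finite)

lemma TE_two: "e \<in> TE \<Longrightarrow> u \<in> e \<Longrightarrow> x \<in> e \<Longrightarrow> u \<noteq> x \<Longrightarrow> e = {u, x} \<and> e \<in> E"
proof -
  assume a: "e \<in> TE" "u \<in> e" "x \<in> e" "u \<noteq> x"
  have "e = {u, x}" using card2_eq[of e u x] TE_fin[OF a(1)] a by simp
  moreover have "e \<in> E" using TE_cases[OF a(1)] a by auto
  ultimately show ?thesis by simp
qed

lemma TE_share: "e \<in> TE \<Longrightarrow> e' \<in> TE \<Longrightarrow> e \<noteq> e' \<Longrightarrow> u \<in> e \<Longrightarrow> u \<in> e' \<Longrightarrow> x \<in> e \<Longrightarrow> x \<in> e' \<Longrightarrow> x = u"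
proof (rule ccontr)
  assume a: "e \<in> TE" "e' \<in> TE" "e \<noteq> e'" "u \<in> e" "u \<in> e'" "x \<in> e" "x \<in> e'" "x \<noteq> u"
  have "e = {u, x}" using TE_two[OF a(1) a(4) a(6)] a(8) by simp
  moreover have "e' = {u, x}" using TE_two[OF a(2) a(5) a(7)] a(8) by simp
  ultimately show False using a(3) by simp
qed

lemma adm1: "\<forall>e\<in>TE. lab_idx (lab e) \<subseteq> {0..n}"
  using adm unfolding admissible_def by (elim conjE)
lemma adm2: "\<forall>v\<in>V. gdeg E v = 3 \<longrightarrow>
        (\<exists>j k. j \<noteq> k \<and> lab ` {e \<in> tedges V E. v \<in> e} = {Lab j, Lab k, Dif j k})"
  using adm unfolding admissible_def by (elim conjE)
lemma adm3: "\<forall>e\<in>tedges V E. (\<forall>v\<in>e. gdeg E v \<noteq> 3) \<longrightarrow> (\<exists>i. lab e = Lab i)"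
  using adm unfolding admissible_def by (elim conjE)
lemma adm4: "\<forall>e\<in>tedges V E. \<forall>e'\<in>tedges V E. e \<noteq> e' \<longrightarrow>
        \<not> (\<exists>v. v \<in> e \<and> v \<in> e' \<and> gdeg E v = 3) \<longrightarrow>
        lab_idx (lab e) \<inter> lab_idx (lab e') = {}"
  using adm unfolding admissible_def by (elim conjE)

lemma disj: "e \<in> TE \<Longrightarrow> e' \<in> TE \<Longrightarrow> e \<noteq> e' \<Longrightarrow> \<not> (\<exists>x. x \<in> e \<and> x \<in> e' \<and> deg3 x) \<Longrightarrow>
   lab_idx (lab e) \<inter> lab_idx (lab e') = {}"
  using adm4 by blast

lemma disj': "e \<in> TE \<Longrightarrow> e' \<in> TE \<Longrightarrow> e \<noteq> e' \<Longrightarrow> i \<in> lab_idx (lab e) \<Longrightarrow> i \<in> lab_idx (lab e') \<Longrightarrow>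
   \<exists>x. x \<in> e \<and> x \<in> e' \<and> deg3 x"
  using disj by blast

lemma idx_bound: "e \<in> TE \<Longrightarrow> i \<in> lab_idx (lab e) \<Longrightarrow> i \<le> n"
proof -
  assume a: "e \<in> TE" "i \<in> lab_idx (lab e)"
  have "lab_idx (lab e) \<subseteq> {0..n}" using adm1 a(1) by blast
  then show ?thesis using a(2) by auto
qed

lemma nondeg_Lab: "e \<in> TE \<Longrightarrow> (\<forall>x\<in>e. \<not> deg3 x) \<Longrightarrow> \<exists>i. lab e = Lab i"
  using adm3 by blast

lemma deg3_img: "w \<in> V \<Longrightarrow> deg3 w \<Longrightarrow> \<exists>j k. j \<noteq> k \<and> lab ` {e \<in> TE. w \<in> e} = {Lab j, Lab k, Dif j k}"
  using adm2 by blast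

lemma TE_at_nonloop: "gdeg E w \<noteq> 1 \<Longrightarrow> {e \<in> TE. w \<in> e} = {e \<in> E. w \<in> e}"
  by (auto simp: tedges_def)

lemma deg3_inj: "w \<in> V \<Longrightarrow> deg3 w \<Longrightarrow> inj_on lab {e \<in> TE. w \<in> e}"
proof -
  assume a: "w \<in> V" "deg3 w"
  obtain j k where jk: "j \<noteq> k" "lab ` {e \<in> TE. w \<in> e} = {Lab j, Lab k, Dif j k}" using deg3_img a by blast
  have eq: "{e \<in> TE. w \<in> e} = {e \<in> E. w \<in> e}" using a by (intro TE_at_nonloop) simp
  have c3: "card {e \<in> TE. w \<in> e} = 3" using a eq by (simp add: gdeg_def)
  have "card (lab ` {e \<in> TE. w \<in> e}) = 3" using jk by simp
  moreover have "finite {e \<in> TE. w \<in> e}" using eq finE by simp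
  ultimately show ?thesis using c3 by (intro eq_card_imp_inj_on) simp_all
qed

lemma Dif_info: "e \<in> TE \<Longrightarrow> lab e = Dif j k \<Longrightarrow> j \<noteq> k"
proof -
  assume a: "e \<in> TE" "lab e = Dif j k"
  have "\<exists>x\<in>e. deg3 x" using nondeg_Lab[OF a(1)] a(2) by auto
  then obtain w where w: "w \<in> e" "deg3 w" by blast
  have wV: "w \<in> V" using TE_cases[OF a(1)] Esub[of e] w by auto
  obtain j' k' where jk: "j' \<noteq> k'" "lab ` {e \<in> TE. w \<in> e} = {Lab j', Lab k', Dif j' k'}"
    using deg3_img[OF wV w(2)] by blast
  have "lab e \<in> lab ` {e \<in> TE. w \<in> e}" using a w by blast
  then show ?thesis using jk a(2) by auto
qed

lemma node_cone:
  fixes dummy :: "'k::comm_ring_1"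
  assumes e: "e \<in> TE" and u: "u \<in> e" "u \<in> V"
  shows "(nodev (lab e) :: nat \<Rightarrow> 'k) \<in> Lv_cone V E n lab u"
proof -
  let ?p = "nodev (lab e) :: nat \<Rightarrow> 'k"
  have supp: "\<And>i. ?p i \<noteq> 0 \<Longrightarrow> i \<in> lab_idx (lab e)" by (rule nodev_supp)
  have big: "\<forall>i>n. ?p i = 0" using supp idx_bound[OF e] by force
  have gens: "\<And>g. g \<in> (Iv_gens V E n lab u :: 'k mpoly set) \<Longrightarrow> eval g ?p = 0"
  proof -
    fix g assume g: "g \<in> (Iv_gens V E n lab u :: 'k mpoly set)"
    show "eval g ?p = 0"
    proof (cases "deg3 u")
      case True
      then obtain i where i: "g = Var i" "\<forall>j k. lab ` {e \<in> TE. u \<in> e} = {Lab j, Lab k, Dif j k} \<longrightarrow> i \<noteq> j \<and> i \<noteq> k"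
        using g unfolding Iv_gens_def by auto
      obtain j k where jk: "j \<noteq> k" "lab ` {e \<in> TE. u \<in> e} = {Lab j, Lab k, Dif j k}"
        using deg3_img[OF u(2) True] by blast
      have "lab e \<in> {Lab j, Lab k, Dif j k}" using jk(2) e u by blast
      then have "lab_idx (lab e) \<subseteq> {j, k}" by auto
      moreover have "i \<noteq> j" "i \<noteq> k" using i jk by auto
      ultimately have "?p i = 0" using supp by blast
      then show ?thesis using i by simp
    next
      case False
      then have "g \<in> {Var i | i. i \<le> n \<and> (\<forall>e\<in>TE. u \<in> e \<longrightarrow> i \<notin> lab_idx (lab e))}
        \<union> {Var j - Var k | j k. \<exists>e\<in>TE. u \<in> e \<and> lab e = Dif j k}"
        using g unfolding Iv_gens_def by simp
      then consider i where "g = Var i" "\<forall>e\<in>TE. u \<in> e \<longrightarrow> i \<notin> lab_idx (lab e)"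
        | j k e' where "g = Var j - Var k" "e' \<in> TE" "u \<in> e'" "lab e' = Dif j k"
        by blast
      then show ?thesis
      proof cases
        case 1
        then have "?p i = 0" using supp e u by blast
        then show ?thesis using 1 by simp
      next
        case 2
        show ?thesis
        proof (cases "e' = e")
          case True
          then show ?thesis using 2 by (simp add: eval_diff)
        next
          case ne: False
          have "\<not> (\<exists>x. x \<in> e' \<and> x \<in> e \<and> deg3 x)"
            using TE_share[OF 2(2) e ne 2(3) u(1)] False by blast
          then have "lab_idx (lab e') \<inter> lab_idx (lab e) = {}" using disj[OF 2(2) e ne] by blast
          then have "?p j = 0" "?p k = 0" using supp 2(4) by auto
          then show ?thesis using 2 by (simp add: eval_diff)
        qed
      qed
    qed
  qed
  show ?thesis unfolding Lv_cone_def using big gens by simp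
qed

end

locale cyc = gsetup V E n lab for V :: "'v set" and E n lab +
  fixes vs :: "'v list" and m :: nat
  assumes m3: "m \<ge> 3" and len: "length vs = m" and dist: "distinct vs" and subV: "set vs \<subseteq> V"
    and adjc: "\<forall>i<m. adj E (vs ! i) (vs ! ((i + 1) mod m))"
begin

definition Vt :: "nat \<Rightarrow> 'v" where "Vt i = vs ! (i mod m)"
definition Ed :: "nat \<Rightarrow> 'v set" where "Ed i = {Vt i, Vt (Suc i)}"

lemma mpos: "m > 0" using m3 by simp

lemma Vt_V: "Vt i \<in> V"
  using subV len mpos unfolding Vt_def by (metis mod_less_divisor nth_mem subsetD)

lemma Vt_eq: "Vt i = Vt j \<longleftrightarrow> i mod m = j mod m"
  unfolding Vt_def using dist len mpos by (simp add: nth_eq_iff_index_eq)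

lemma Vt_per: "Vt (i + m) = Vt i"
  unfolding Vt_def by simp

lemma adjVt: "adj E (Vt i) (Vt (Suc i))"
proof -
  have "adj E (vs ! (i mod m)) (vs ! ((i mod m + 1) mod m))" using adjc mpos by simp
  moreover have "(i mod m + 1) mod m = Suc i mod m" by (simp add: mod_Suc_eq)
  ultimately show ?thesis unfolding Vt_def by simp
qed

lemma modneq: "a < b \<Longrightarrow> b < a + m \<Longrightarrow> (c + a) mod m \<noteq> (c + b) mod m"
proof
  assume a: "a < b" "b < a + m" "(c + a) mod m = (c + b) mod m"
  then have "m dvd (c + b) - (c + a)" using mod_eq_dvd_iff_nat[of "c + a" "c + b" m] by simp
  then have "m dvd b - a" by simp
  moreover have "0 < b - a" "b - a < m" using a by auto
  ultimately show False using nat_dvd_not_less by blast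
qed

lemma Vt_neq: "a < b \<Longrightarrow> b < a + m \<Longrightarrow> Vt (c + a) \<noteq> Vt (c + b)"
  using modneq Vt_eq by blast

lemma Ed_E: "Ed i \<in> E" using adjD[OF adjVt[of i]] unfolding Ed_def by simp
lemma Ed_TE: "Ed i \<in> TE" using Ed_E unfolding tedges_def by simp

lemma Ed_per: "Ed (i + m) = Ed i"
proof -
  have "Vt (Suc (i + m)) = Vt (Suc i)" using Vt_per[of "Suc i"] by simp
  then show ?thesis unfolding Ed_def using Vt_per by simp
qed

lemma Ed_neq: assumes "a < b" "b < a + m" shows "Ed (c + a) \<noteq> Ed (c + b)"
proof
  assume eq: "Ed (c + a) = Ed (c + b)"
  have n1: "Vt (c + a) \<noteq> Vt (c + b)" using Vt_neq assms by blast
  then have x: "Vt (c + a) = Vt (Suc (c + b)) \<and> Vt (Suc (c + a)) = Vt (c + b)"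
    using eq unfolding Ed_def by (auto simp: doubleton_eq_iff)
  show False
  proof (cases "b + 1 < a + m")
    case True
    have "Vt (c + a) \<noteq> Vt (c + (b + 1))" using Vt_neq[of a "b + 1" c] assms True by simp
    then show False using x by simp
  next
    case False
    then have "b = a + m - 1" using assms by simp
    then have "Vt (c + (a + 1)) \<noteq> Vt (c + b)" using Vt_neq[of "a + 1" b c] assms m3 by simp
    then show False using x by simp
  qed
qed

lemma Ed_mem: "Vt i \<in> Ed i" "Vt (Suc i) \<in> Ed i" by (auto simp: Ed_def)

lemma Ed_prev: "Vt i \<in> Ed (i + m - 1)"
proof -
  have "Suc (i + m - 1) = i + m" using mpos by simp
  then show ?thesis using Vt_per unfolding Ed_def by simp
qed

lemma Ed_prev_eq: "Ed (j + m - 1) = {Vt (j + m - 1), Vt j}"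
proof -
  have "Suc (j + m - 1) = j + m" using mpos by simp
  then have e: "Vt (Suc (j + m - 1)) = Vt j" using Vt_per by metis
  show ?thesis by (simp only: Ed_def e)
qed

lemma adj_prev: "adj E (Vt (i + m - 1)) (Vt i)"
proof -
  have "Suc (i + m - 1) = i + m" using mpos by simp
  then show ?thesis using adjVt[of "i + m - 1"] Vt_per by simp
qed

lemma two_labs: assumes w: "deg3 (Vt i)"
  shows "lab (Ed (i + m - 1)) \<noteq> lab (Ed i) \<and>
    (\<exists>j k. j \<noteq> k \<and> lab (Ed (i + m - 1)) \<in> {Lab j, Lab k, Dif j k} \<and> lab (Ed i) \<in> {Lab j, Lab k, Dif j k})"
proof -
  obtain j k where jk: "j \<noteq> k" "lab ` {e \<in> TE. Vt i \<in> e} = {Lab j, Lab k, Dif j k}"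
    using deg3_img[OF Vt_V w] by blast
  have inj: "inj_on lab {e \<in> TE. Vt i \<in> e}" using deg3_inj[OF Vt_V w] .
  have mem: "Ed (i + m - 1) \<in> {e \<in> TE. Vt i \<in> e}" "Ed i \<in> {e \<in> TE. Vt i \<in> e}"
    using Ed_TE Ed_prev Ed_mem by auto
  have ne: "Ed (i + m - 1) \<noteq> Ed i"
  proof -
    have "Ed (i + 0) \<noteq> Ed (i + (m - 1))" using Ed_neq[of 0 "m - 1" i] m3 by simp
    moreover have "i + (m - 1) = i + m - 1" using mpos by simp
    ultimately show ?thesis by simp
  qed
  have "lab (Ed (i + m - 1)) \<noteq> lab (Ed i)" using inj mem ne by (meson inj_on_contraD)
  moreover have "lab (Ed (i + m - 1)) \<in> {Lab j, Lab k, Dif j k}" "lab (Ed i) \<in> {Lab j, Lab k, Dif j k}"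
    using jk(2) mem by blast+
  ultimately show ?thesis using jk(1) by blast
qed

lemma exists_kappa: "\<exists>\<kappa> a b. \<not> deg3 (Vt \<kappa>) \<and> lab (Ed (\<kappa> + m - 1)) = Lab a \<and> lab (Ed \<kappa>) = Lab b"
proof (cases "\<exists>i. deg3 (Vt i)")
  case False
  have "\<forall>x\<in>Ed (0 + m - 1). \<not> deg3 x" "\<forall>x\<in>Ed 0. \<not> deg3 x" using False unfolding Ed_def by auto
  then obtain a b where "lab (Ed (0 + m - 1)) = Lab a" "lab (Ed 0) = Lab b"
    using nondeg_Lab Ed_TE by metis
  then show ?thesis using False by blast
next
  case True
  then obtain i where w: "deg3 (Vt i)" by blast
  from two_labs[OF w] obtain j k where jk: "j \<noteq> k"
    "lab (Ed (i + m - 1)) \<in> {Lab j, Lab k, Dif j k}" "lab (Ed i) \<in> {Lab j, Lab k, Dif j k}"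
    "lab (Ed (i + m - 1)) \<noteq> lab (Ed i)" by blast
  have n1: "\<not> deg3 (Vt (Suc i))" using far1 adjVt w by blast
  have n0: "\<not> deg3 (Vt (i + m - 1))" using far1 adj_prev w by blast
  show ?thesis
  proof (cases "\<exists>a. lab (Ed i) = Lab a")
    case True
    then obtain a where a: "lab (Ed i) = Lab a" by blast
    have n2: "\<not> deg3 (Vt (Suc (Suc i)))"
    proof
      assume d: "deg3 (Vt (Suc (Suc i)))"
      have "Vt (i + 0) \<noteq> Vt (i + 2)" using Vt_neq[of 0 2 i] m3 by simp
      then show False using far2[OF adjVt[of i] adjVt[of "Suc i"] _ w d] by simp
    qed
    have "\<forall>x\<in>Ed (Suc i). \<not> deg3 x" using n1 n2 unfolding Ed_def by auto
    then obtain b where b: "lab (Ed (Suc i)) = Lab b" using nondeg_Lab Ed_TE by metis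
    have "Ed (Suc i + m - 1) = Ed i" using Ed_per[of i] by simp
    then show ?thesis using a b n1 by metis
  next
    case False
    have "lab (Ed i) = Dif j k" using jk(3) False by auto
    then obtain b where b: "lab (Ed (i + m - 1)) = Lab b" using jk(2) jk(4) by auto
    let ?p = "i + m - 1"
    have nm2: "\<not> deg3 (Vt (?p + m - 1))"
    proof
      assume d: "deg3 (Vt (?p + m - 1))"
      have e1: "Vt (?p + m - 1) = Vt (i + (m - 2))"
      proof -
        have "?p + m - 1 = i + (m - 2) + m" using m3 by simp
        then show ?thesis using Vt_per by simp
      qed
      have e2: "Vt i = Vt (i + m)" using Vt_per by simp
      have "Vt (i + (m - 2)) \<noteq> Vt (i + m)" using Vt_neq[of "m - 2" m i] m3 by simp
      then have "Vt (?p + m - 1) \<noteq> Vt i" using e1 e2 by simp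
      moreover have "adj E (Vt (?p + m - 1)) (Vt ?p)" by (rule adj_prev)
      moreover have "adj E (Vt ?p) (Vt i)" by (rule adj_prev)
      ultimately show False using far2 d w by blast
    qed
    have "\<forall>x\<in>Ed (?p + m - 1). \<not> deg3 x"
      using Ed_prev_eq[of ?p] nm2 n0 by auto
    then obtain a where a: "lab (Ed (?p + m - 1)) = Lab a" using nondeg_Lab Ed_TE by metis
    show ?thesis using a b n0 by blast
  qed
qed

end

locale pick = cyc V E n lab vs m for V :: "'v set" and E n lab vs m +
  fixes \<kappa> a b :: nat
  assumes nd: "\<not> deg3 (Vt \<kappa>)" and la: "lab (Ed (\<kappa> + m - 1)) = Lab a" and lb: "lab (Ed \<kappa>) = Lab b"
begin

abbreviation "vv \<equiv> Vt \<kappa>"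
abbreviation "w1 \<equiv> Vt (\<kappa> + m - 1)"
abbreviation "w2 \<equiv> Vt (Suc \<kappa>)"

lemma ea: "Ed (\<kappa> + m - 1) = {w1, vv}" by (rule Ed_prev_eq)
lemma eb: "Ed \<kappa> = {vv, w2}" by (simp add: Ed_def)

lemma w12: "w1 \<noteq> w2"
proof -
  have "Vt (\<kappa> + 1) \<noteq> Vt (\<kappa> + (m - 1))" using Vt_neq[of 1 "m - 1" \<kappa>] m3 by simp
  moreover have "\<kappa> + (m - 1) = \<kappa> + m - 1" using m3 by simp
  ultimately show ?thesis by simp
qed

lemma adj_v1: "adj E vv w1" using adj_prev adj_sym by blast
lemma adj_v2: "adj E vv w2" using adjVt by blast

lemma eab: "Ed (\<kappa> + m - 1) \<noteq> Ed \<kappa>"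
proof -
  have "Ed (\<kappa> + 0) \<noteq> Ed (\<kappa> + (m - 1))" using Ed_neq[of 0 "m - 1" \<kappa>] m3 by simp
  moreover have "\<kappa> + (m - 1) = \<kappa> + m - 1" using m3 by simp
  ultimately show ?thesis by simp
qed

lemma ab: "a \<noteq> b"
proof -
  have "\<not> (\<exists>x. x \<in> Ed (\<kappa> + m - 1) \<and> x \<in> Ed \<kappa> \<and> deg3 x)"
    using TE_share[OF Ed_TE Ed_TE eab, of vv] Ed_prev Ed_mem nd by blast
  then have "lab_idx (lab (Ed (\<kappa> + m - 1))) \<inter> lab_idx (lab (Ed \<kappa>)) = {}"
    using disj[OF Ed_TE Ed_TE eab] by blast
  then show ?thesis using la lb by simp
qed

lemma an: "a \<le> n" using idx_bound[of "Ed (\<kappa> + m - 1)" a] Ed_TE la by simp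
lemma bn: "b \<le> n" using idx_bound[of "Ed \<kappa>" b] Ed_TE lb by simp

lemma at_a: "\<zeta> \<in> TE \<Longrightarrow> u \<in> \<zeta> \<Longrightarrow> a \<in> lab_idx (lab \<zeta>) \<Longrightarrow> u \<noteq> vv \<Longrightarrow> u = w1 \<or> (deg3 w1 \<and> adj E u w1)"
proof -
  assume z: "\<zeta> \<in> TE" "u \<in> \<zeta>" "a \<in> lab_idx (lab \<zeta>)" "u \<noteq> vv"
  show ?thesis
  proof (cases "\<zeta> = Ed (\<kappa> + m - 1)")
    case True then show ?thesis using z ea by auto
  next
    case False
    have "a \<in> lab_idx (lab (Ed (\<kappa> + m - 1)))" using la by simp
    then obtain x where x: "x \<in> \<zeta>" "x \<in> Ed (\<kappa> + m - 1)" "deg3 x" using disj'[OF z(1) Ed_TE False z(3)] by blast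
    have xw: "x = w1" using x ea nd by auto
    show ?thesis
    proof (cases "u = w1")
      case False
      have "\<zeta> = {u, w1} \<and> \<zeta> \<in> E" using TE_two[OF z(1) z(2)] x xw False by metis
      then have "adj E u w1" by (auto simp: adj_def)
      then show ?thesis using x xw by simp
    qed simp
  qed
qed

lemma at_b: "\<zeta> \<in> TE \<Longrightarrow> u \<in> \<zeta> \<Longrightarrow> b \<in> lab_idx (lab \<zeta>) \<Longrightarrow> u \<noteq> vv \<Longrightarrow> u = w2 \<or> (deg3 w2 \<and> adj E u w2)"
proof -
  assume z: "\<zeta> \<in> TE" "u \<in> \<zeta>" "b \<in> lab_idx (lab \<zeta>)" "u \<noteq> vv"
  show ?thesis
  proof (cases "\<zeta> = Ed \<kappa>")
    case True then show ?thesis using z eb by auto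
  next
    case False
    have "b \<in> lab_idx (lab (Ed \<kappa>))" using lb by simp
    then obtain x where x: "x \<in> \<zeta>" "x \<in> Ed \<kappa>" "deg3 x" using disj'[OF z(1) Ed_TE False z(3)] by blast
    have xw: "x = w2" using x eb nd by auto
    show ?thesis
    proof (cases "u = w2")
      case False
      have "\<zeta> = {u, w2} \<and> \<zeta> \<in> E" using TE_two[OF z(1) z(2)] x xw False by metis
      then have "adj E u w2" by (auto simp: adj_def)
      then show ?thesis using x xw by simp
    qed simp
  qed
qed

lemma gens_ab:
  assumes u: "u \<in> V" "u \<noteq> vv"
  shows "(Var a :: 'k::comm_ring_1 mpoly) \<in> Iv_gens V E n lab u \<or> (Var b :: 'k mpoly) \<in> Iv_gens V E n lab u"
proof (cases "deg3 u")
  case True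
  obtain j k where jk: "j \<noteq> k" "lab ` {e \<in> TE. u \<in> e} = {Lab j, Lab k, Dif j k}"
    using deg3_img[OF u(1) True] by blast
  have notboth: "\<not> (Lab a \<in> lab ` {e \<in> TE. u \<in> e} \<and> Lab b \<in> lab ` {e \<in> TE. u \<in> e})"
  proof
    assume h: "Lab a \<in> lab ` {e \<in> TE. u \<in> e} \<and> Lab b \<in> lab ` {e \<in> TE. u \<in> e}"
    then obtain za zb where z: "za \<in> TE" "u \<in> za" "lab za = Lab a" "zb \<in> TE" "u \<in> zb" "lab zb = Lab b"
      by auto
    have "u = w1 \<or> (deg3 w1 \<and> adj E u w1)" using at_a[OF z(1) z(2) _ u(2)] z(3) by simp
    then have "u = w1" using far1 True by blast
    moreover have "u = w2 \<or> (deg3 w2 \<and> adj E u w2)" using at_b[OF z(4) z(5) _ u(2)] z(6) by simp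
    then have "u = w2" using far1 True by blast
    ultimately show False using w12 by simp
  qed
  show ?thesis
  proof (cases "Lab a \<in> lab ` {e \<in> TE. u \<in> e}")
    case False
    have "\<forall>j k. lab ` {e \<in> TE. u \<in> e} = {Lab j, Lab k, Dif j k} \<longrightarrow> a \<noteq> j \<and> a \<noteq> k"
      using False by auto
    then have "(Var a :: 'k mpoly) \<in> Iv_gens V E n lab u" unfolding Iv_gens_def using True an by auto
    then show ?thesis by simp
  next
    case T2: True
    then have False2: "Lab b \<notin> lab ` {e \<in> TE. u \<in> e}" using notboth by blast
    have "\<forall>j k. lab ` {e \<in> TE. u \<in> e} = {Lab j, Lab k, Dif j k} \<longrightarrow> b \<noteq> j \<and> b \<noteq> k"
      using False2 by auto
    then have "(Var b :: 'k mpoly) \<in> Iv_gens V E n lab u" unfolding Iv_gens_def using True bn by auto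
    then show ?thesis by simp
  qed
next
  case False
  have mem: "\<And>c. c \<le> n \<Longrightarrow> (\<forall>e\<in>TE. u \<in> e \<longrightarrow> c \<notin> lab_idx (lab e)) \<Longrightarrow> (Var c :: 'k mpoly) \<in> Iv_gens V E n lab u"
    unfolding Iv_gens_def using False by auto
  show ?thesis
  proof (rule ccontr)
    assume "\<not> ?thesis"
    then have "\<not> (\<forall>e\<in>TE. u \<in> e \<longrightarrow> a \<notin> lab_idx (lab e))" "\<not> (\<forall>e\<in>TE. u \<in> e \<longrightarrow> b \<notin> lab_idx (lab e))"
      using mem an bn by blast+
    then obtain za zb where z: "za \<in> TE" "u \<in> za" "a \<in> lab_idx (lab za)" "zb \<in> TE" "u \<in> zb" "b \<in> lab_idx (lab zb)"
      by blast
    have A: "u = w1 \<or> (deg3 w1 \<and> adj E u w1)" using at_a[OF z(1-3) u(2)] .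
    have B: "u = w2 \<or> (deg3 w2 \<and> adj E u w2)" using at_b[OF z(4-6) u(2)] .
    show False
    proof (cases "u = w1")
      case True
      show False
      proof (cases "u = w2")
        case True then show False using \<open>u = w1\<close> w12 by simp
      next
        case False
        then have "adj E w1 w2" using B \<open>u = w1\<close> by simp
        then show False using triangle[OF adj_v1 _ adj_v2] by blast
      qed
    next
      case F1: False
      then have d1: "deg3 w1" "adj E u w1" using A by auto
      show False
      proof (cases "u = w2")
        case True
        then have "adj E w1 w2" using d1 adj_sym by blast
        then show False using triangle[OF adj_v1 _ adj_v2] by blast
      next
        case False
        then have "deg3 w2" using B by simp
        then show False using far2[OF adj_sym[OF adj_v1] adj_v2 w12] d1 by blast
      qed
    qed
  qed
qed

lemma v_edges: "{e \<in> TE. vv \<in> e} = {Ed (\<kappa> + m - 1), Ed \<kappa>}"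
proof -
  have sub: "{Ed (\<kappa> + m - 1), Ed \<kappa>} \<subseteq> {e \<in> E. vv \<in> e}" using Ed_E Ed_prev Ed_mem by auto
  have fin: "finite {e \<in> E. vv \<in> e}" using finE by simp
  have c2: "card {Ed (\<kappa> + m - 1), Ed \<kappa>} = 2" using eab by simp
  have ge: "gdeg E vv \<ge> 2" unfolding gdeg_def using card_mono[OF fin sub] c2 by simp
  have le: "gdeg E vv \<le> 3" using deg_le3 Vt_V by blast
  have g2: "gdeg E vv = 2" using ge le nd by simp
  have eq: "{e \<in> TE. vv \<in> e} = {e \<in> E. vv \<in> e}" using g2 by (intro TE_at_nonloop) simp
  have "{Ed (\<kappa> + m - 1), Ed \<kappa>} = {e \<in> E. vv \<in> e}"
    using card_seteq[OF fin sub] c2 g2 unfolding gdeg_def by simp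
  then show ?thesis using eq by simp
qed

lemma gens_v:
  assumes "t \<le> n" "t \<noteq> a" "t \<noteq> b"
  shows "(Var t :: 'k::comm_ring_1 mpoly) \<in> Iv_gens V E n lab vv"
proof -
  have "\<forall>e\<in>TE. vv \<in> e \<longrightarrow> t \<notin> lab_idx (lab e)"
  proof (intro ballI impI)
    fix e assume "e \<in> TE" "vv \<in> e"
    then have "e \<in> {Ed (\<kappa> + m - 1), Ed \<kappa>}" using v_edges by blast
    then show "t \<notin> lab_idx (lab e)" using la lb assms by auto
  qed
  then show ?thesis unfolding Iv_gens_def using nd assms by auto
qed

end

lemma pair_det:
  assumes jk: "j \<noteq> k" and l1: "l1 \<in> {Lab j, Lab k, Dif j k}" and l2: "l2 \<in> {Lab j, Lab k, Dif j k}" and ne: "l1 \<noteq> l2"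
  shows "(nodev l1 j * nodev l2 k :: 'k::{comm_ring_1, ring_char_0}) \<noteq> nodev l1 k * nodev l2 j"
proof -
  have u1: "unitv j j = (1::'k)" "unitv j k = (0::'k)" "unitv k k = (1::'k)" "unitv k j = (0::'k)"
    using jk by (auto simp: unitv_def)
  from l1 consider "l1 = Lab j" | "l1 = Lab k" | "l1 = Dif j k" by blast
  then show ?thesis
  proof cases
    case 1
    from l2 ne consider "l2 = Lab k" | "l2 = Dif j k" using 1 by blast
    then show ?thesis by cases (simp_all add: 1 u1 jk)
  next
    case 2
    from l2 ne consider "l2 = Lab j" | "l2 = Dif j k" using 2 by blast
    then show ?thesis by cases (simp_all add: 2 u1 jk)
  next
    case 3
    from l2 ne consider "l2 = Lab j" | "l2 = Lab k" using 3 by blast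
    then show ?thesis by cases (simp_all add: 3 u1 jk)
  qed
qed
lemma pair_zero:
  assumes "l \<in> {Lab j, Lab k, Dif j k}" "i \<noteq> j" "i \<noteq> k"
  shows "(nodev l i :: 'k::comm_ring_1) = 0"
  using assms by (auto simp: unitv_def)
lemma pair_cover:
  assumes "j \<noteq> k" "l1 \<in> {Lab j, Lab k, Dif j k}" "l2 \<in> {Lab j, Lab k, Dif j k}" "l1 \<noteq> l2"
  shows "j \<in> lab_idx l1 \<union> lab_idx l2" "k \<in> lab_idx l1 \<union> lab_idx l2"
  using assms by auto

context pick
begin

lemma disj_single:
  assumes "s < i" "i < m" "\<not> deg3 (Vt (\<kappa> + s))" "\<not> deg3 (Vt (\<kappa> + Suc s))"
  shows "lab_idx (lab (Ed (\<kappa> + s))) \<inter> lab_idx (lab (Ed (\<kappa> + i))) = {}"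
proof -
  have ne: "Ed (\<kappa> + s) \<noteq> Ed (\<kappa> + i)" using Ed_neq assms by simp
  have "\<not> (\<exists>x. x \<in> Ed (\<kappa> + s) \<and> x \<in> Ed (\<kappa> + i) \<and> deg3 x)"
    using assms(3,4) unfolding Ed_def by auto
  then show ?thesis using disj[OF Ed_TE Ed_TE ne] by blast
qed

lemma w_notin:
  assumes "Suc s < i" "i < m"
  shows "Vt (\<kappa> + Suc s) \<notin> Ed (\<kappa> + i)"
proof -
  have "Vt (\<kappa> + Suc s) \<noteq> Vt (\<kappa> + i)" using Vt_neq[of "Suc s" i \<kappa>] assms by simp
  moreover have "Vt (\<kappa> + Suc s) \<noteq> Vt (\<kappa> + Suc i)" using Vt_neq[of "Suc s" "Suc i" \<kappa>] assms by simp
  ultimately show ?thesis unfolding Ed_def by auto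
qed

lemma disj_pair:
  assumes "Suc s < i" "i < m" "\<not> deg3 (Vt (\<kappa> + s))" "\<not> deg3 (Vt (\<kappa> + Suc (Suc s)))" "t \<in> {s, Suc s}"
  shows "lab_idx (lab (Ed (\<kappa> + t))) \<inter> lab_idx (lab (Ed (\<kappa> + i))) = {}"
proof -
  have ne: "Ed (\<kappa> + t) \<noteq> Ed (\<kappa> + i)" using Ed_neq[of t i \<kappa>] assms by auto
  have wn: "Vt (\<kappa> + Suc s) \<notin> Ed (\<kappa> + i)" using w_notin assms by simp
  have "\<not> (\<exists>x. x \<in> Ed (\<kappa> + t) \<and> x \<in> Ed (\<kappa> + i) \<and> deg3 x)"
  proof
    assume "\<exists>x. x \<in> Ed (\<kappa> + t) \<and> x \<in> Ed (\<kappa> + i) \<and> deg3 x"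
    then obtain x where x: "x \<in> Ed (\<kappa> + t)" "x \<in> Ed (\<kappa> + i)" "deg3 x" by blast
    have "x = Vt (\<kappa> + Suc s)" using x(1,3) assms(3,4,5) unfolding Ed_def by auto
    then show False using x(2) wn by simp
  qed
  then show ?thesis using disj[OF Ed_TE Ed_TE ne] by blast
qed

lemma good_from:
  fixes dummy :: "'k::{comm_ring_1, ring_char_0}"
  shows "s \<le> m \<Longrightarrow> \<not> deg3 (Vt (\<kappa> + s)) \<Longrightarrow>
    \<exists>C. good (map (\<lambda>i. nodev (lab (Ed (\<kappa> + i))) :: nat \<Rightarrow> 'k) [s..<m]) C \<and>
        C \<subseteq> (\<Union>i\<in>{s..<m}. lab_idx (lab (Ed (\<kappa> + i))))"
proof (induction "m - s" arbitrary: s rule: less_induct)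
  case less
  let ?N = "\<lambda>i. nodev (lab (Ed (\<kappa> + i))) :: nat \<Rightarrow> 'k"
  show ?case
  proof (cases "s = m")
    case True then show ?thesis by (auto intro: good.gnil)
  next
    case False
    then have sm: "s < m" using less.prems by simp
    have split1: "map ?N [s..<m] = ?N s # map ?N [Suc s..<m]" using sm by (simp add: upt_conv_Cons)
    show ?thesis
    proof (cases "deg3 (Vt (\<kappa> + Suc s))")
      case False
      have ex: "\<exists>C. good (map ?N [Suc s..<m]) C \<and> C \<subseteq> (\<Union>i\<in>{Suc s..<m}. lab_idx (lab (Ed (\<kappa> + i))))"
        by (rule less.hyps[of "Suc s"]) (use sm False in auto)
      obtain C where C: "good (map ?N [Suc s..<m]) C" "C \<subseteq> (\<Union>i\<in>{Suc s..<m}. lab_idx (lab (Ed (\<kappa> + i))))"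
        using ex by blast
      have "\<forall>x\<in>Ed (\<kappa> + s). \<not> deg3 x" using less.prems(2) False unfolding Ed_def by auto
      then obtain c where c: "lab (Ed (\<kappa> + s)) = Lab c" using nondeg_Lab Ed_TE by metis
      have cC: "c \<notin> C"
      proof
        assume "c \<in> C"
        then obtain i where i: "i \<in> {Suc s..<m}" "c \<in> lab_idx (lab (Ed (\<kappa> + i)))" using C(2) by blast
        have "lab_idx (lab (Ed (\<kappa> + s))) \<inter> lab_idx (lab (Ed (\<kappa> + i))) = {}"
          using disj_single[of s i] i less.prems(2) False by simp
        then show False using i c by auto
      qed
      have g: "good (?N s # map ?N [Suc s..<m]) (insert c C)"
      proof (rule good.gone)
        show "?N s c \<noteq> 0" using c by (simp add: unitv_def)
        show "\<forall>i. i \<noteq> c \<longrightarrow> ?N s i = 0" using c by (simp add: unitv_def)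
        show "c \<notin> C" by (rule cC)
        show "good (map ?N [Suc s..<m]) C" by (rule C(1))
      qed
      have "insert c C \<subseteq> (\<Union>i\<in>{s..<m}. lab_idx (lab (Ed (\<kappa> + i))))"
      proof -
        have "c \<in> lab_idx (lab (Ed (\<kappa> + s)))" using c by simp
        then have c1: "c \<in> (\<Union>i\<in>{s..<m}. lab_idx (lab (Ed (\<kappa> + i))))" using sm by (intro UN_I[of s]) auto
        have c2: "(\<Union>i\<in>{Suc s..<m}. lab_idx (lab (Ed (\<kappa> + i)))) \<subseteq> (\<Union>i\<in>{s..<m}. lab_idx (lab (Ed (\<kappa> + i))))"
          by (intro UN_mono) auto
        show ?thesis using c1 subset_trans[OF C(2) c2] by simp
      qed
      then show ?thesis using g split1 by (intro exI[of _ "insert c C"]) simp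
    next
      case True
      have s1: "Suc s < m"
      proof (rule ccontr)
        assume "\<not> Suc s < m"
        then have "Suc s = m" using sm by simp
        then have "Vt (\<kappa> + Suc s) = Vt \<kappa>" using Vt_per[of \<kappa>] by (simp add: add.commute)
        then show False using True nd by simp
      qed
      have a12: "adj E (Vt (\<kappa> + Suc s)) (Vt (\<kappa> + Suc (Suc s)))" using adjVt[of "\<kappa> + Suc s"] by simp
      have n2: "\<not> deg3 (Vt (\<kappa> + Suc (Suc s)))" using far1[OF a12 True] by blast
      have ex: "\<exists>C. good (map ?N [Suc (Suc s)..<m]) C \<and> C \<subseteq> (\<Union>i\<in>{Suc (Suc s)..<m}. lab_idx (lab (Ed (\<kappa> + i))))"
        by (rule less.hyps[of "Suc (Suc s)"]) (use s1 n2 in auto)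
      obtain C where C: "good (map ?N [Suc (Suc s)..<m]) C" "C \<subseteq> (\<Union>i\<in>{Suc (Suc s)..<m}. lab_idx (lab (Ed (\<kappa> + i))))"
        using ex by blast
      have split2: "map ?N [s..<m] = ?N s # ?N (Suc s) # map ?N [Suc (Suc s)..<m]"
        using sm s1 by (simp add: upt_conv_Cons)
      have prv: "Ed (\<kappa> + Suc s + m - 1) = Ed (\<kappa> + s)" using Ed_per[of "\<kappa> + s"] by simp
      have tl: "lab (Ed (\<kappa> + Suc s + m - 1)) \<noteq> lab (Ed (\<kappa> + Suc s)) \<and>
        (\<exists>j k. j \<noteq> k \<and> lab (Ed (\<kappa> + Suc s + m - 1)) \<in> {Lab j, Lab k, Dif j k} \<and> lab (Ed (\<kappa> + Suc s)) \<in> {Lab j, Lab k, Dif j k})"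
        by (rule two_labs[OF True])
      have tl2: "lab (Ed (\<kappa> + s)) \<noteq> lab (Ed (\<kappa> + Suc s)) \<and>
        (\<exists>j k. j \<noteq> k \<and> lab (Ed (\<kappa> + s)) \<in> {Lab j, Lab k, Dif j k} \<and> lab (Ed (\<kappa> + Suc s)) \<in> {Lab j, Lab k, Dif j k})"
        using tl unfolding prv .
      from tl2 obtain j k where jk: "j \<noteq> k"
        "lab (Ed (\<kappa> + s)) \<in> {Lab j, Lab k, Dif j k}" "lab (Ed (\<kappa> + Suc s)) \<in> {Lab j, Lab k, Dif j k}"
        "lab (Ed (\<kappa> + s)) \<noteq> lab (Ed (\<kappa> + Suc s))" by blast
      have cov: "j \<in> lab_idx (lab (Ed (\<kappa> + s))) \<union> lab_idx (lab (Ed (\<kappa> + Suc s)))"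
        "k \<in> lab_idx (lab (Ed (\<kappa> + s))) \<union> lab_idx (lab (Ed (\<kappa> + Suc s)))"
        using pair_cover[OF jk(1) jk(2) jk(3) jk(4)] by auto
      have notC: "\<And>x. x \<in> lab_idx (lab (Ed (\<kappa> + s))) \<union> lab_idx (lab (Ed (\<kappa> + Suc s))) \<Longrightarrow> x \<notin> C"
      proof
        fix x assume x: "x \<in> lab_idx (lab (Ed (\<kappa> + s))) \<union> lab_idx (lab (Ed (\<kappa> + Suc s)))" "x \<in> C"
        then obtain i where i: "i \<in> {Suc (Suc s)..<m}" "x \<in> lab_idx (lab (Ed (\<kappa> + i)))" using C(2) by blast
        obtain t where t: "t \<in> {s, Suc s}" "x \<in> lab_idx (lab (Ed (\<kappa> + t)))" using x(1) by blast
        have "lab_idx (lab (Ed (\<kappa> + t))) \<inter> lab_idx (lab (Ed (\<kappa> + i))) = {}"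
          using disj_pair[of s i t] i t less.prems(2) n2 by simp
        then show False using i t by auto
      qed
      have g: "good (?N s # ?N (Suc s) # map ?N [Suc (Suc s)..<m]) (insert j (insert k C))"
      proof (rule good.gtwo)
        show "j \<noteq> k" by (rule jk(1))
        show "j \<notin> C" "k \<notin> C" using notC cov by blast+
        show "\<forall>i. i \<noteq> j \<and> i \<noteq> k \<longrightarrow> ?N s i = 0 \<and> ?N (Suc s) i = 0"
          using pair_zero[OF jk(2)] pair_zero[OF jk(3)] by blast
        show "?N s j * ?N (Suc s) k \<noteq> ?N s k * ?N (Suc s) j"
          using pair_det[OF jk(1) jk(2) jk(3) jk(4)] by simp
        show "good (map ?N [Suc (Suc s)..<m]) C" by (rule C(1))
      qed
      have "insert j (insert k C) \<subseteq> (\<Union>i\<in>{s..<m}. lab_idx (lab (Ed (\<kappa> + i))))"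
      proof -
        have d1: "lab_idx (lab (Ed (\<kappa> + s))) \<subseteq> (\<Union>i\<in>{s..<m}. lab_idx (lab (Ed (\<kappa> + i))))"
          using s1 by (intro UN_upper) auto
        have d2: "lab_idx (lab (Ed (\<kappa> + Suc s))) \<subseteq> (\<Union>i\<in>{s..<m}. lab_idx (lab (Ed (\<kappa> + i))))"
          using s1 by (intro UN_upper) auto
        have d3: "(\<Union>i\<in>{Suc (Suc s)..<m}. lab_idx (lab (Ed (\<kappa> + i)))) \<subseteq> (\<Union>i\<in>{s..<m}. lab_idx (lab (Ed (\<kappa> + i))))"
          by (intro UN_mono) auto
        have "j \<in> (\<Union>i\<in>{s..<m}. lab_idx (lab (Ed (\<kappa> + i))))" "k \<in> (\<Union>i\<in>{s..<m}. lab_idx (lab (Ed (\<kappa> + i))))"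
          using cov d1 d2 by blast+
        then show ?thesis using subset_trans[OF C(2) d3] by simp
      qed
      then show ?thesis using g split2 by (intro exI[of _ "insert j (insert k C)"]) simp
    qed
  qed
qed

end

context pick
begin

lemma full_list:
  "map (\<lambda>i. F (\<kappa> + i)) [0..<m] = F \<kappa> # (map (\<lambda>i. F (\<kappa> + 1 + i)) [0..<m - 2] @ [F (\<kappa> + m - 1)])"
proof (rule nth_equalityI)
  show "length (map (\<lambda>i. F (\<kappa> + i)) [0..<m]) = length (F \<kappa> # (map (\<lambda>i. F (\<kappa> + 1 + i)) [0..<m - 2] @ [F (\<kappa> + m - 1)]))"
    using m3 by simp
next
  fix i assume "i < length (map (\<lambda>i. F (\<kappa> + i)) [0..<m])"
  then have i: "i < m" by simp
  show "map (\<lambda>i. F (\<kappa> + i)) [0..<m] ! i = (F \<kappa> # (map (\<lambda>i. F (\<kappa> + 1 + i)) [0..<m - 2] @ [F (\<kappa> + m - 1)])) ! i"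
  proof (cases i)
    case 0 then show ?thesis using i by simp
  next
    case (Suc i')
    show ?thesis
    proof (cases "i' < m - 2")
      case True then show ?thesis using Suc i by (simp add: nth_append)
    next
      case False
      then have "i' = m - 2" using Suc i by simp
      moreover have "\<kappa> + Suc (m - 2) = \<kappa> + m - 1" using m3 by simp
      ultimately show ?thesis using Suc i by (simp add: nth_append)
    qed
  qed
qed

lemma T0_exists:
  fixes dummy :: "'k::{idom, ring_char_0}"
  shows "\<exists>T0. T0 \<subseteq> {0..n} \<and> card T0 = m - 2 \<and> a \<notin> T0 \<and> b \<notin> T0 \<and>
           Wc m (\<lambda>i. nodev (lab (Ed i)) :: nat \<Rightarrow> 'k) \<kappa> T0 \<noteq> 0"
proof -
  let ?N = "\<lambda>i. nodev (lab (Ed i)) :: nat \<Rightarrow> 'k"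
  let ?L = "map (\<lambda>i. ?N (\<kappa> + 1 + i)) [0..<m - 2]"
  obtain C where C: "good (map (\<lambda>i. ?N (\<kappa> + i)) [0..<m]) C"
    using good_from[of 0] nd by auto
  have wz: "wedgeL (map (\<lambda>i. ?N (\<kappa> + i)) [0..<m]) C \<noteq> 0" using good_nz[OF C] by blast
  have Nb: "?N \<kappa> = unitv b" using lb by simp
  have Na: "?N (\<kappa> + m - 1) = unitv a" using la by simp
  have "wedge1 (unitv b) (wedgeL (?L @ [unitv a])) C \<noteq> 0"
    using wz unfolding full_list[of ?N] Nb Na by simp
  from wedge1_unit_nz[OF this] have bC: "b \<in> C" and w1: "wedgeL (?L @ [unitv a]) (C - {b}) \<noteq> 0" by auto
  have "wedgeL (unitv a # ?L) (C - {b}) \<noteq> 0" using w1 wedgeL_rot[of "unitv a" ?L "C - {b}"] by simp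
  then have "wedge1 (unitv a) (wedgeL ?L) (C - {b}) \<noteq> 0" by simp
  from wedge1_unit_nz[OF this] have aC: "a \<in> C - {b}" and w2: "wedgeL ?L (C - {b} - {a}) \<noteq> 0" by auto
  let ?T = "C - {b} - {a}"
  from wedgeL_nz[OF w2] have T: "card ?T = m - 2" "?T \<subseteq> (\<Union>v\<in>set ?L. {i. v i \<noteq> 0})" by auto
  have "?T \<subseteq> {0..n}"
  proof
    fix i assume "i \<in> ?T"
    then obtain j where "?N j i \<noteq> 0" using T(2) by auto
    then have "i \<in> lab_idx (lab (Ed j))" by (rule nodev_supp)
    then show "i \<in> {0..n}" using idx_bound[OF Ed_TE] by simp
  qed
  moreover have "Wc m ?N \<kappa> ?T \<noteq> 0" unfolding Wc_def using w2 by simp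
  ultimately show ?thesis using T(1) by blast
qed

lemma line_nodes:
  "(nodev (lab (Ed (k + m - 1))) :: nat \<Rightarrow> 'k::comm_ring_1) \<in> Lv_cone V E n lab (Vt k)"
  "(nodev (lab (Ed k)) :: nat \<Rightarrow> 'k::comm_ring_1) \<in> Lv_cone V E n lab (Vt k)"
  using node_cone[OF Ed_TE Ed_prev Vt_V] node_cone[OF Ed_TE Ed_mem(1) Vt_V] by auto

lemma beta_ab:
  fixes dummy :: "'k::{comm_ring_1, ring_char_0}"
  assumes k: "k < m" and km: "\<kappa> < m"
  shows "beta (nodev (lab (Ed (k + m - 1))) :: nat \<Rightarrow> 'k) (nodev (lab (Ed k))) (Var a * Var b) = (if k = \<kappa> then 1 else 0)"
proof -
  let ?P = "nodev (lab (Ed (k + m - 1))) :: nat \<Rightarrow> 'k"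
  let ?Q = "nodev (lab (Ed k)) :: nat \<Rightarrow> 'k"
  have gen: "beta ?P ?Q (Var a * Var b) = ?P a * ?Q b + ?Q a * ?P b"
    by (simp only: beta_Var_mult sl1_Var)
  show ?thesis
  proof (cases "k = \<kappa>")
    case True
    then show ?thesis using gen la lb ab by (simp add: unitv_def)
  next
    case False
    have "Vt k \<noteq> vv" using Vt_eq k km False by simp
    then have "(Var a :: 'k mpoly) \<in> Iv_gens V E n lab (Vt k) \<or> (Var b :: 'k mpoly) \<in> Iv_gens V E n lab (Vt k)"
      using gens_ab Vt_V by blast
    then have "(?P a = 0 \<and> ?Q a = 0) \<or> (?P b = 0 \<and> ?Q b = 0)"
      using Lv_Var[OF line_nodes(1)] Lv_Var[OF line_nodes(2)] by blast
    then show ?thesis using gen False by auto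
  qed
qed

lemma beta_I:
  fixes f :: "'k::field_char_0 mpoly"
  assumes f: "f \<in> vanishing_ideal n (CG_cone V E n lab)"
  shows "beta (nodev (lab (Ed (k + m - 1))) :: nat \<Rightarrow> 'k) (nodev (lab (Ed k))) f = 0"
proof (rule beta_vanish[OF f])
  let ?P = "nodev (lab (Ed (k + m - 1))) :: nat \<Rightarrow> 'k"
  let ?Q = "nodev (lab (Ed k)) :: nat \<Rightarrow> 'k"
  fix x
  show "(\<lambda>i. x * ?P i) \<in> CG_cone V E n lab" using Lv_CG[OF Vt_V Lv_scale[OF line_nodes(1)]] .
  show "(\<lambda>i. x * ?Q i) \<in> CG_cone V E n lab" using Lv_CG[OF Vt_V Lv_scale[OF line_nodes(2)]] .
  show "(\<lambda>i. x * (?P i + ?Q i)) \<in> CG_cone V E n lab"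
    using Lv_CG[OF Vt_V Lv_scale[OF Lv_add[OF line_nodes(1) line_nodes(2)]]] .
qed

lemma cubic_in:
  fixes dummy :: "'k::comm_ring_1"
  assumes t: "t \<le> n" "t \<noteq> a" "t \<noteq> b"
  shows "(Var t * (Var a * Var b) :: 'k mpoly) \<in> vanishing_ideal n (CG_cone V E n lab)"
proof -
  let ?M = "mon t + (mon a + mon b)"
  have eq: "(Var t * (Var a * Var b) :: 'k mpoly) = Poly_Mapping.single ?M 1"
    by (simp add: Var_def mult_single)
  have ks: "Poly_Mapping.keys ?M \<subseteq> {t, a, b}"
    using keys_add[of "mon t" "mon a + mon b"] keys_add[of "mon a" "mon b"] by auto
  have "Poly_Mapping.single ?M (1::'k) \<in> polyS n"
    unfolding polyS_def using ks t(1) an bn by auto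
  moreover have "\<forall>p\<in>CG_cone V E n lab. eval (Poly_Mapping.single ?M (1::'k)) p = 0"
  proof
    fix p :: "nat \<Rightarrow> 'k" assume "p \<in> CG_cone V E n lab"
    then obtain u where u: "u \<in> V" "p \<in> Lv_cone V E n lab u" unfolding CG_cone_def by blast
    have ev: "eval (Poly_Mapping.single ?M (1::'k)) p = p t * (p a * p b)"
      by (simp add: eval_single1 monv_add)
    show "eval (Poly_Mapping.single ?M (1::'k)) p = 0"
    proof (cases "u = vv")
      case True
      have "p t = 0" using Lv_Var[OF u(2)] gens_v[OF t] True by blast
      then show ?thesis using ev by simp
    next
      case False
      have "(Var a :: 'k mpoly) \<in> Iv_gens V E n lab u \<or> (Var b :: 'k mpoly) \<in> Iv_gens V E n lab u"
        using gens_ab u(1) False by blast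
      then have "p a = 0 \<or> p b = 0" using Lv_Var[OF u(2)] by blast
      then show ?thesis using ev by auto
    qed
  qed
  ultimately show ?thesis unfolding eq vanishing_ideal_def by simp
qed

end

context cyc
begin

lemma Vt_mod: "Vt (i mod m + j) = Vt (i + j)"
  using Vt_eq by (simp add: mod_add_left_eq)

lemma Ed_mod: "Ed (i mod m + j) = Ed (i + j)"
  unfolding Ed_def using Vt_mod[of i j] Vt_mod[of i "Suc j"] by simp

lemma exists_kappa_lt: "\<exists>\<kappa> a b. \<kappa> < m \<and> \<not> deg3 (Vt \<kappa>) \<and> lab (Ed (\<kappa> + m - 1)) = Lab a \<and> lab (Ed \<kappa>) = Lab b"
proof -
  obtain \<kappa> a b where k: "\<not> deg3 (Vt \<kappa>)" "lab (Ed (\<kappa> + m - 1)) = Lab a" "lab (Ed \<kappa>) = Lab b"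
    using exists_kappa by blast
  have "Vt (\<kappa> mod m) = Vt \<kappa>" using Vt_mod[of \<kappa> 0] by simp
  moreover have "Ed (\<kappa> mod m) = Ed \<kappa>" using Ed_mod[of \<kappa> 0] by simp
  moreover have "Ed (\<kappa> mod m + m - 1) = Ed (\<kappa> + m - 1)"
  proof -
    have "\<kappa> mod m + m - 1 = \<kappa> mod m + (m - 1)" "\<kappa> + m - 1 = \<kappa> + (m - 1)" using mpos by auto
    then show ?thesis using Ed_mod[of \<kappa> "m - 1"] by simp
  qed
  moreover have "\<kappa> mod m < m" using mpos by simp
  ultimately show ?thesis using k by metis
qed

end

context pick
begin

lemma main:
  fixes dummy :: "'k::field_char_0"
  assumes km: "\<kappa> < m"
  shows "betti_nonzero n (vanishing_ideal n (CG_cone V E n lab :: (nat \<Rightarrow> 'k) set)) (m - 2) m"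
proof -
  let ?I = "vanishing_ideal n (CG_cone V E n lab :: (nat \<Rightarrow> 'k) set)"
  let ?N = "\<lambda>i. nodev (lab (Ed i)) :: nat \<Rightarrow> 'k"
  obtain T0 where T0: "T0 \<subseteq> {0..n}" "card T0 = m - 2" "a \<notin> T0" "b \<notin> T0" "Wc m ?N \<kappa> T0 \<noteq> 0"
    using T0_exists by blast
  define c where "c = (\<lambda>T. if T = T0 then (Var a * Var b :: 'k mpoly) else 0)"
  have ab_poly: "(Var a * Var b :: 'k mpoly) = Poly_Mapping.single (mon a + mon b) 1"
    by (rule Var_mult_Var)
  have kc: "kchain n (m - 2) c"
  proof -
    have "(Var a * Var b :: 'k mpoly) \<in> polyS n"
    proof -
      have "Poly_Mapping.keys (mon a + mon b) \<subseteq> {a, b}"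
        using keys_add[of "mon a" "mon b"] by auto
      then show ?thesis unfolding ab_poly polyS_def using an bn by auto
    qed
    moreover have "(0 :: 'k mpoly) \<in> polyS n" by (simp add: polyS_def)
    ultimately show ?thesis unfolding kchain_def c_def using T0 by auto
  qed
  have hom: "\<forall>T. homog (m - (m - 2)) (c T)"
  proof
    fix T
    have e: "m - (m - 2) = 2" using m3 by simp
    have "homog 2 (Var a * Var b :: 'k mpoly)"
      unfolding ab_poly homog_def by (simp add: mdeg_add)
    moreover have "homog 2 (0 :: 'k mpoly)" by (simp add: homog_def)
    ultimately show "homog (m - (m - 2)) (c T)" unfolding e c_def by simp
  qed
  have cyc: "\<forall>U. kdiff n c U \<in> ?I"
  proof
    fix U
    show "kdiff n c U \<in> ?I"
    proof (cases "U \<subseteq> {0..n}")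
      case False then show ?thesis by (simp add: kdiff_def VI_zero)
    next
      case True
      have "(\<Sum>t\<in>{0..n} - U. (-1) ^ card {u\<in>U. u < t} * Var t * c (insert t U)) \<in> ?I"
      proof (rule VI_sum)
        fix t assume t: "t \<in> {0..n} - U"
        show "(-1) ^ card {u\<in>U. u < t} * Var t * c (insert t U) \<in> ?I"
        proof (cases "insert t U = T0")
          case True
          then have "t \<in> T0" by auto
          then have "t \<le> n" "t \<noteq> a" "t \<noteq> b" using T0 by auto
          then have "Var t * (Var a * Var b) \<in> ?I" by (rule cubic_in)
          then have "(-1) ^ card {u\<in>U. u < t} * (Var t * (Var a * Var b)) \<in> ?I" by (rule VI_neg1)
          then show ?thesis using True unfolding c_def by (simp add: mult.assoc)
        next
          case False
          then show ?thesis unfolding c_def by (simp add: VI_zero)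
        qed
      qed
      then show ?thesis unfolding kdiff_def using True by simp
    qed
  qed
  have nb: "\<not> (\<exists>bb aa. kchain n (m - 2 + 1) bb \<and> kchain n (m - 2) aa \<and> (\<forall>T. aa T \<in> ?I) \<and>
                  (\<forall>T. c T = kdiff n bb T + aa T))"
  proof
    assume "\<exists>bb aa. kchain n (m - 2 + 1) bb \<and> kchain n (m - 2) aa \<and> (\<forall>T. aa T \<in> ?I) \<and>
                  (\<forall>T. c T = kdiff n bb T + aa T)"
    then obtain bb aa where h: "\<forall>T. aa T \<in> ?I" "\<forall>T. c T = kdiff n bb T + aa T" by blast
    show False
    proof (rule psi_contra[of m ?N T0 n \<kappa> a b ?I c bb aa])
      show "2 \<le> m" using m3 by simp
      show "\<And>i. ?N (i + m) = ?N i" using Ed_per by simp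
      show "T0 \<subseteq> {0..n}" by (rule T0(1))
      show "\<kappa> < m" by (rule km)
      show "\<And>k. k < m \<Longrightarrow> beta (?N (k + m - 1)) (?N k) (Var a * Var b) = (if k = \<kappa> then 1 else 0)"
        using beta_ab km by blast
      show "Wc m ?N \<kappa> T0 \<noteq> 0" by (rule T0(5))
      show "\<And>k f. k < m \<Longrightarrow> f \<in> ?I \<Longrightarrow> beta (?N (k + m - 1)) (?N k) f = 0"
        using beta_I by blast
      show "\<And>T. c T = (if T = T0 then Var a * Var b else 0)" by (simp add: c_def)
      show "\<And>T. c T = kdiff n bb T + aa T" using h(2) by blast
      show "\<And>T. aa T \<in> ?I" using h(1) by blast
    qed
  qed
  show ?thesis unfolding betti_nonzero_def
    using kc hom cyc nb by (intro exI[of _ c]) simp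
qed

end

theorem corollary3p3:
  fixes V :: "'v set" and E :: "'v set set" and m :: nat
    and lab :: "'v set \<Rightarrow> label"
  assumes G: "graph_conditions V E"
    and n_def: "n = card V - (card E - card V + 1)"
    and adm: "admissible V E n lab"
    and cyc: "has_cycle V E m"
  shows "\<not> satisfies_N n
           (vanishing_ideal n (CG_cone V E n lab :: (nat \<Rightarrow> 'k::{alg_closed_field, field_char_0}) set))
           2 (m - 2)"
proof -
  obtain vs where vs: "m \<ge> 3" "length vs = m" "distinct vs" "set vs \<subseteq> V"
    "\<forall>i<m. adj E (vs ! i) (vs ! ((i + 1) mod m))"
    using cyc unfolding has_cycle_def by blast
  interpret C: cyc V E n lab vs m
    by unfold_locales (use G adm vs in auto)
  obtain \<kappa> a b where k: "\<kappa> < m" "\<not> C.deg3 (C.Vt \<kappa>)" "lab (C.Ed (\<kappa> + m - 1)) = Lab a" "lab (C.Ed \<kappa>) = Lab b"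
    using C.exists_kappa_lt by blast
  interpret P: pick V E n lab vs m \<kappa> a b
    by unfold_locales (use k in auto)
  have bn: "betti_nonzero n (vanishing_ideal n (CG_cone V E n lab :: (nat \<Rightarrow> 'k) set)) (m - 2) m"
    by (rule P.main[OF k(1)])
  have "1 \<le> m - 2" "m - 2 \<le> m - 2" "m \<noteq> m - 2 + 2 - 1" using vs(1) by auto
  then show ?thesis unfolding satisfies_N_def using bn by blast
qed

end
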